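(* Let $M\ge1$, $N\ge1$, and let $v_1,\dots,v_N$ be nonzero complex numbers with $v_j^{-2}\neq\beta$ and pairwise distinct $v_j^2$. Then $$\sum_{\{n\}}(-\beta)^{\sum_{j=1}^{M-1}jn_j}\langle\{n\}|\Psi(\{v\}_N)\rangle=\frac{\prod_{j=1}^Nv_j^{N-1}(v_j^{-1}-\beta v_j)^{M+N-2}}{\prod_{1\le j<k\le N}(v_k^2-v_j^2)}\det_N V,$$ where the sum is over all tuples $\{n\}=(n_0,\dots,n_{M-1})$ of nonnegative integers with $\sum_kn_k=N$, and $V$ is the $N\times N$ matrix with entries $$V_{jk}=\sum_{m=0}^{j-1}(-1)^m(-\beta)^{j-N}\binom{M+N-1}{m}(1-\beta v_k^2)^{1-m+j-N}\quad(1\le j\le N-1),$$ $$V_{Nk}=-\sum_{m=\max(N-1,1)}^{M+N-1}(-1)^m\binom{M+N-1}{m}(1-\beta v_k^2)^{1-m}.$$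
   Context: Non-Hermitian phase model with parameter $\beta\ne0$. $\mathcal{F}$ is the Fock space with orthonormal basis $|n\rangle$ ($n\ge0$); $\phi|n\rangle=|n-1\rangle$, $\phi|0\rangle=0$, $\phi^\dagger|n\rangle=|n+1\rangle$, $\pi|n\rangle=\delta_{n,0}|n\rangle$. Sites $0,\dots,M-1$ carry $\mathcal{F}_0,\dots,\mathcal{F}_{M-1}$. With $W_a=\mathbb{C}^2$, $\mathcal{L}_{aj}(v)=\begin{pmatrix}v^{-1}-\beta v\pi_j&\phi_j^\dagger\\ \phi_j&v\end{pmatrix}$, $\mathcal{T}_a(v)=\mathcal{L}_{a,M-1}(v)\cdots\mathcal{L}_{a,0}(v)=\begin{pmatrix}\mathcal{A}&\mathcal{B}\\ \mathcal{C}&\mathcal{D}\end{pmatrix}(v)$. $|\Omega\rangle=\otimes_j|0\rangle_j$, $|\Psi(\{v\}_N)\rangle=\prod_{j=1}^N\mathcal{B}(v_j)|\Omega\rangle$, $|\{n\}\rangle=\otimes_{j=0}^{M-1}|n_j\rangle_j$, and $\langle\{n\}|$ is its dual. *)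

theory Defs
  imports Complex_Main "Jordan_Normal_Form.Determinant"
begin

text \<open>States of the tensor product of the Fock spaces at sites 0,1,2,...:
  a state is given by its coefficients with respect to the orthonormal basis
  vectors |{n}>, indexed by occupation functions n :: nat => nat.\<close>

type_synonym cstate = "(nat \<Rightarrow> nat) \<Rightarrow> complex"
type_synonym opr = "cstate \<Rightarrow> cstate"

definition vac :: cstate where
  "vac = (\<lambda>n. if n = (\<lambda>_. 0) then 1 else 0)"

definition phi_op :: "nat \<Rightarrow> opr" where
  "phi_op j = (\<lambda>\<psi> n. \<psi> (n(j := n j + 1)))"

definition phid_op :: "nat \<Rightarrow> opr" where
  "phid_op j = (\<lambda>\<psi> n. if 0 < n j then \<psi> (n(j := n j - 1)) else 0)"

definition pi_op :: "nat \<Rightarrow> opr" where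
  "pi_op j = (\<lambda>\<psi> n. if n j = 0 then \<psi> n else 0)"

text \<open>2x2 matrices (indices 0,1) with operator entries\<close>
type_synonym omat = "nat \<Rightarrow> nat \<Rightarrow> opr"

definition omat_mult :: "omat \<Rightarrow> omat \<Rightarrow> omat" where
  "omat_mult X Y = (\<lambda>a b \<psi> n. X a 0 (Y 0 b \<psi>) n + X a 1 (Y 1 b \<psi>) n)"

definition omat_id :: omat where
  "omat_id = (\<lambda>a b \<psi> n. if a = b then \<psi> n else 0)"

definition Lax :: "complex \<Rightarrow> complex \<Rightarrow> nat \<Rightarrow> omat" where
  "Lax \<beta> v j = (\<lambda>a b.
     if a = 0 \<and> b = 0 then (\<lambda>\<psi> n. inverse v * \<psi> n - \<beta> * v * pi_op j \<psi> n)
     else if a = 0 then phid_op j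
     else if b = 0 then phi_op j
     else (\<lambda>\<psi> n. v * \<psi> n))"

fun monodromy :: "complex \<Rightarrow> nat \<Rightarrow> complex \<Rightarrow> omat" where
  "monodromy \<beta> 0 v = omat_id"
| "monodromy \<beta> (Suc k) v = omat_mult (Lax \<beta> v k) (monodromy \<beta> k v)"

definition Bop :: "complex \<Rightarrow> nat \<Rightarrow> complex \<Rightarrow> opr" where
  "Bop \<beta> M v = monodromy \<beta> M v 0 1"

definition Psi :: "complex \<Rightarrow> nat \<Rightarrow> complex list \<Rightarrow> cstate" where
  "Psi \<beta> M vs = foldr (Bop \<beta> M) vs vac"

text \<open>configurations {n} = (n_0,...,n_{M-1}) with total occupation N
  (extended by zero beyond site M-1)\<close>
definition configs :: "nat \<Rightarrow> nat \<Rightarrow> (nat \<Rightarrow> nat) set" where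
  "configs M N = {n. (\<forall>j\<ge>M. n j = 0) \<and> (\<Sum>j<M. n j) = N}"

text \<open>the matrix V (0-based indices: row j0 = j-1, column k0 = k-1)\<close>
definition Vmat :: "complex \<Rightarrow> nat \<Rightarrow> nat \<Rightarrow> (nat \<Rightarrow> complex) \<Rightarrow> complex mat" where
  "Vmat \<beta> M N v = mat N N (\<lambda>(j0, k0).
     let j = j0 + 1; k = k0 + 1 in
     if j \<le> N - 1 then
       (\<Sum>m = 0..j - 1. (-1) ^ m * (-\<beta>) powi (int j - int N)
           * of_nat ((M + N - 1) choose m)
           * (1 - \<beta> * (v k)\<^sup>2) powi (1 - int m + int j - int N))
     else
       - (\<Sum>m = max (N - 1) 1..M + N - 1. (-1) ^ m
           * of_nat ((M + N - 1) choose m) * (1 - \<beta> * (v k)\<^sup>2) powi (1 - int m)))"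

end

theory Submission
  imports Defs
begin

lemma configs_sub: "configs M P \<subseteq> {f. \<forall>x. (x \<in> {..<M} \<longrightarrow> f x \<in> {..P}) \<and> (x \<notin> {..<M} \<longrightarrow> f x = 0)}"
proof
  fix m assume m: "m \<in> configs M P"
  { fix x assume "x < M"
    then have "m x \<le> (\<Sum>j<M. m j)" by (intro member_le_sum) auto
    with m have "m x \<le> P" by (simp add: configs_def) }
  with m show "m \<in> {f. \<forall>x. (x \<in> {..<M} \<longrightarrow> f x \<in> {..P}) \<and> (x \<notin> {..<M} \<longrightarrow> f x = 0)}"
    by (auto simp: configs_def)
qed

lemma finite_configs[simp]: "finite (configs M P)"
  by (rule finite_subset[OF configs_sub finite_set_of_finite_funs]) auto

lemma sum_upd: fixes m :: "nat \<Rightarrow> nat" and k M :: nat shows "k < M \<Longrightarrow> (\<Sum>j<M. (m(k := x)) j) = (\<Sum>j<M. m j) - m k + (x::nat)"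
proof -
  assume k: "k < M"
  have "(\<Sum>j<M. (m(k := x)) j) = (m(k:=x)) k + (\<Sum>j\<in>{..<M}-{k}. (m(k := x)) j)"
    using k by (subst sum.remove[OF finite_lessThan, where x=k]) auto
  also have "(\<Sum>j\<in>{..<M}-{k}. (m(k := x)) j) = (\<Sum>j\<in>{..<M}-{k}. m j)" by (rule sum.cong) auto
  also have "(\<Sum>j<M. m j) = m k + (\<Sum>j\<in>{..<M}-{k}. m j)"
    using k by (subst sum.remove[OF finite_lessThan, where x=k]) auto
  ultimately show ?thesis by simp
qed

lemma configs_up: assumes "k < M" "m \<in> configs M P" shows "m(k := Suc (m k)) \<in> configs M (Suc P)"
proof -
  have "m k \<le> (\<Sum>j<M. m j)" using assms(1) by (intro member_le_sum) auto
  have "(\<Sum>j<M. (m(k := m k + 1)) j) = Suc P"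
    using assms \<open>m k \<le> _\<close> unfolding Suc_eq_plus1 sum_upd[OF assms(1)] by (simp add: configs_def)
  then show ?thesis using assms unfolding configs_def by auto
qed

lemma configs_down: assumes "k < M" "m \<in> configs M (Suc P)" "0 < m k" shows "m(k := m k - Suc 0) \<in> configs M P"
proof -
  have "m k \<le> (\<Sum>j<M. m j)" using assms(1) by (intro member_le_sum) auto
  then have "(\<Sum>j<M. (m(k := m k - Suc 0)) j) = P"
    using assms unfolding sum_upd[OF assms(1)] by (simp add: configs_def)
  then show ?thesis using assms unfolding configs_def by auto
qed

lemma configs0: "configs M 0 = {(\<lambda>_. 0)}"
proof -
  { fix m assume "m \<in> configs M 0"
    then have "m = (\<lambda>_. 0)" unfolding configs_def by (auto intro!: ext) (meson lessThan_iff not_le) }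
  moreover have "(\<lambda>_. 0) \<in> configs M 0" by (simp add: configs_def)
  ultimately show ?thesis by blast
qed

definition pr :: "nat \<Rightarrow> nat \<Rightarrow> cstate \<Rightarrow> cstate \<Rightarrow> complex" where
  "pr M P w \<psi> = (\<Sum>m\<in>configs M P. w m * \<psi> m)"

lemma pr_phid:
  assumes k: "k < M"
  shows "pr M (Suc P) w (phid_op k \<psi>) = pr M P (phi_op k w) \<psi>"
proof -
  have "pr M (Suc P) w (phid_op k \<psi>) = (\<Sum>m\<in>configs M (Suc P). if m \<in> {m. 0 < m k} then w m * \<psi> (m(k := m k - 1)) else 0)"
    unfolding pr_def phid_op_def by (rule sum.cong) auto
  also have "\<dots> = (\<Sum>m\<in>configs M (Suc P) \<inter> {m. 0 < m k}. w m * \<psi> (m(k := m k - 1)))"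
    by (subst sum.inter_restrict) auto
  also have "\<dots> = (\<Sum>m\<in>configs M P. w (m(k := m k + 1)) * \<psi> m)"
  proof (rule sum.reindex_bij_witness[where i="\<lambda>m. m(k := m k + 1)" and j="\<lambda>m. m(k := m k - 1)"])
    fix m assume "m \<in> configs M P"
    then show "m(k := m k + 1) \<in> configs M (Suc P) \<inter> {m. 0 < m k}"
      using k by (auto intro: configs_up configs_down)
  next
    fix m assume m: "m \<in> configs M (Suc P) \<inter> {m. 0 < m k}"
    then show "m(k := m k - 1) \<in> configs M P"
      using k by (auto intro: configs_up configs_down)
  qed auto
  finally show ?thesis unfolding pr_def phi_op_def .
qed

lemma pr_phid0:
  assumes k: "k < M"
  shows "pr M 0 w (phid_op k \<psi>) = 0"
  unfolding pr_def configs0 phid_op_def by simp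

lemma pr_phi:
  assumes k: "k < M"
  shows "pr M P w (phi_op k \<psi>) = pr M (Suc P) (phid_op k w) \<psi>"
proof -
  have "pr M (Suc P) (phid_op k w) \<psi> = (\<Sum>m\<in>configs M (Suc P). if m \<in> {m. 0 < m k} then w (m(k := m k - 1)) * \<psi> m else 0)"
    unfolding pr_def phid_op_def by (rule sum.cong) auto
  also have "\<dots> = (\<Sum>m\<in>configs M (Suc P) \<inter> {m. 0 < m k}. w (m(k := m k - 1)) * \<psi> m)"
    by (subst sum.inter_restrict) auto
  also have "\<dots> = (\<Sum>m\<in>configs M P. w m * \<psi> (m(k := m k + 1)))"
  proof (rule sum.reindex_bij_witness[where i="\<lambda>m. m(k := m k + 1)" and j="\<lambda>m. m(k := m k - 1)"])
    fix m assume "m \<in> configs M P"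
    then show "m(k := m k + 1) \<in> configs M (Suc P) \<inter> {m. 0 < m k}"
      using k by (auto intro: configs_up configs_down)
  next
    fix m assume m: "m \<in> configs M (Suc P) \<inter> {m. 0 < m k}"
    then show "m(k := m k - 1) \<in> configs M P"
      using k by (auto intro: configs_up configs_down)
  qed auto
  finally show ?thesis unfolding pr_def phi_op_def by simp
qed

definition LT00 :: "complex \<Rightarrow> complex \<Rightarrow> nat \<Rightarrow> cstate \<Rightarrow> cstate" where
  "LT00 \<beta> v k w = (\<lambda>m. inverse v * w m - \<beta> * v * pi_op k w m)"

lemma pr_L00: "pr M P w (\<lambda>n. inverse v * \<psi> n - \<beta> * v * pi_op k \<psi> n) = pr M P (LT00 \<beta> v k w) \<psi>"
  unfolding pr_def LT00_def pi_op_def by (rule sum.cong) (auto simp: algebra_simps)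

lemma pr_scal: "pr M P w (\<lambda>n. v * \<psi> n) = pr M P (\<lambda>n. v * w n) \<psi>"
  unfolding pr_def by (rule sum.cong) (auto simp: algebra_simps)

lemma pr_add: "pr M P w (\<lambda>n. \<psi> n + \<chi> n) = pr M P w \<psi> + pr M P w \<chi>"
  unfolding pr_def by (simp add: sum.distrib algebra_simps)

lemma pr_addw: "pr M P (\<lambda>n. w n + u n) \<psi> = pr M P w \<psi> + pr M P u \<psi>"
  unfolding pr_def by (simp add: sum.distrib algebra_simps)

fun tBD :: "complex \<Rightarrow> complex \<Rightarrow> nat \<Rightarrow> cstate \<Rightarrow> cstate \<times> cstate" where
  "tBD \<beta> v 0 w = ((\<lambda>_. 0), w)"
| "tBD \<beta> v (Suc k) w =
     ((\<lambda>n. fst (tBD \<beta> v k (LT00 \<beta> v k w)) n + snd (tBD \<beta> v k (phi_op k w)) n),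
      (\<lambda>n. fst (tBD \<beta> v k (phid_op k w)) n + snd (tBD \<beta> v k (\<lambda>m. v * w m)) n))"

lemma mono_Suc: "monodromy \<beta> (Suc k) v a b \<psi> = (\<lambda>n. Lax \<beta> v k a 0 (monodromy \<beta> k v 0 b \<psi>) n + Lax \<beta> v k a 1 (monodromy \<beta> k v 1 b \<psi>) n)"
  by (simp add: omat_mult_def)

lemma transpose_BD:
  assumes "k \<le> M"
  shows "\<forall>P w \<psi>. pr M (Suc P) w (monodromy \<beta> k v 0 (Suc 0) \<psi>) = pr M P (fst (tBD \<beta> v k w)) \<psi>
       \<and> pr M P w (monodromy \<beta> k v (Suc 0) (Suc 0) \<psi>) = pr M P (snd (tBD \<beta> v k w)) \<psi>"
  using assms
proof (induction k)
  case 0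
  show ?case by (simp add: omat_id_def pr_def)
next
  case (Suc k)
  then have k: "k < M" and IH: "\<And>P w \<psi>. pr M (Suc P) w (monodromy \<beta> k v 0 (Suc 0) \<psi>) = pr M P (fst (tBD \<beta> v k w)) \<psi>"
     "\<And>P w \<psi>. pr M P w (monodromy \<beta> k v (Suc 0) (Suc 0) \<psi>) = pr M P (snd (tBD \<beta> v k w)) \<psi>" by auto
  show ?case
  proof (intro allI conjI)
    fix P w \<psi>
    show "pr M (Suc P) w (monodromy \<beta> (Suc k) v 0 (Suc 0) \<psi>) = pr M P (fst (tBD \<beta> v (Suc k) w)) \<psi>"
      unfolding mono_Suc pr_add
      by (simp add: Lax_def pr_L00 pr_phid[OF k] IH pr_addw)
    show "pr M P w (monodromy \<beta> (Suc k) v (Suc 0) (Suc 0) \<psi>) = pr M P (snd (tBD \<beta> v (Suc k) w)) \<psi>"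
      unfolding mono_Suc pr_add
      by (simp add: Lax_def pr_scal pr_phi[OF k] IH pr_addw)
  qed
qed

fun tt :: "complex \<Rightarrow> complex \<Rightarrow> (nat \<Rightarrow> nat \<Rightarrow> complex) \<Rightarrow> nat \<Rightarrow> (nat \<Rightarrow> nat) \<Rightarrow> complex \<times> complex" where
  "tt \<beta> v \<omega> 0 n = (0, 1)"
| "tt \<beta> v \<omega> (Suc k) n =
    ((inverse v - \<beta> * v * (if n k = 0 then 1 else 0)) * \<omega> k (n k) * fst (tt \<beta> v \<omega> k n) + \<omega> k (Suc (n k)) * snd (tt \<beta> v \<omega> k n),
     (if 0 < n k then \<omega> k (n k - 1) else 0) * fst (tt \<beta> v \<omega> k n) + v * \<omega> k (n k) * snd (tt \<beta> v \<omega> k n))"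

lemma transfer:
  "\<forall>R. (\<forall>m m'. (\<forall>j\<ge>k. m j = m' j) \<longrightarrow> R m = R m') \<longrightarrow>
     tBD \<beta> v k (\<lambda>m. (\<Prod>j<k. \<omega> j (m j)) * R m) = (\<lambda>n. R n * fst (tt \<beta> v \<omega> k n), \<lambda>n. R n * snd (tt \<beta> v \<omega> k n))"
proof (induction k)
  case 0
  show ?case by auto
next
  case (Suc k)
  show ?case
  proof (intro allI impI)
    fix R :: "(nat \<Rightarrow> nat) \<Rightarrow> complex"
    assume R: "\<forall>m m'. (\<forall>j\<ge>Suc k. m j = m' j) \<longrightarrow> R m = R m'"
    let ?P = "\<lambda>m. (\<Prod>j<k. \<omega> j (m j))"
    define w where "w = (\<lambda>m. (\<Prod>j<Suc k. \<omega> j (m j)) * R m)"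
    define R1 where "R1 = (\<lambda>m. (inverse v - \<beta> * v * (if m k = 0 then 1 else 0)) * \<omega> k (m k) * R m)"
    define R2 where "R2 = (\<lambda>m. \<omega> k (Suc (m k)) * R m)"
    define R3 where "R3 = (\<lambda>m. (if 0 < m k then \<omega> k (m k - 1) else 0) * R m)"
    define R4 where "R4 = (\<lambda>m. v * \<omega> k (m k) * R m)"
    have loc: "\<And>Q. (\<forall>m m'. (\<forall>j\<ge>k. m j = m' j) \<longrightarrow> (\<lambda>m. Q (m k) * R m) m = (\<lambda>m. Q (m k) * R m) m')"
    proof (intro allI impI)
      fix Q :: "nat \<Rightarrow> complex" and m m' :: "nat \<Rightarrow> nat" assume a: "\<forall>j\<ge>k. m j = m' j"
      then have "R m = R m'" using R by auto
      moreover have "m k = m' k" using a by auto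
      ultimately show "(\<lambda>m. Q (m k) * R m) m = (\<lambda>m. Q (m k) * R m) m'" by simp
    qed
    have Pupd: "\<And>m x. ?P (m(k := x)) = ?P m" by (rule prod.cong) auto
    have Rupd: "\<And>m x. R (m(k := x)) = R m" using R by auto
    have e1: "LT00 \<beta> v k w = (\<lambda>m. ?P m * R1 m)"
      by (rule ext) (simp add: LT00_def w_def R1_def pi_op_def prod.lessThan_Suc right_diff_distrib left_diff_distrib mult_ac)
    have e2: "phi_op k w = (\<lambda>m. ?P m * R2 m)"
      by (rule ext) (simp add: phi_op_def w_def R2_def Pupd Rupd prod.lessThan_Suc mult_ac)
    have e3: "phid_op k w = (\<lambda>m. ?P m * R3 m)"
      by (rule ext) (simp add: phid_op_def w_def R3_def Pupd Rupd prod.lessThan_Suc mult_ac)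
    have e4: "(\<lambda>m. v * w m) = (\<lambda>m. ?P m * R4 m)"
      by (rule ext) (simp add: w_def R4_def prod.lessThan_Suc mult_ac)
    have I1: "tBD \<beta> v k (\<lambda>m. ?P m * R1 m) = (\<lambda>n. R1 n * fst (tt \<beta> v \<omega> k n), \<lambda>n. R1 n * snd (tt \<beta> v \<omega> k n))"
      by (rule Suc.IH[THEN spec, THEN mp]) (unfold R1_def, rule loc[of "\<lambda>x. (inverse v - \<beta> * v * (if x = 0 then 1 else 0)) * \<omega> k x"])
    have I2: "tBD \<beta> v k (\<lambda>m. ?P m * R2 m) = (\<lambda>n. R2 n * fst (tt \<beta> v \<omega> k n), \<lambda>n. R2 n * snd (tt \<beta> v \<omega> k n))"
      by (rule Suc.IH[THEN spec, THEN mp]) (unfold R2_def, rule loc[of "\<lambda>x. \<omega> k (Suc x)"])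
    have I3: "tBD \<beta> v k (\<lambda>m. ?P m * R3 m) = (\<lambda>n. R3 n * fst (tt \<beta> v \<omega> k n), \<lambda>n. R3 n * snd (tt \<beta> v \<omega> k n))"
      by (rule Suc.IH[THEN spec, THEN mp]) (unfold R3_def, rule loc[of "\<lambda>x. (if 0 < x then \<omega> k (x - 1) else 0)"])
    have I4: "tBD \<beta> v k (\<lambda>m. ?P m * R4 m) = (\<lambda>n. R4 n * fst (tt \<beta> v \<omega> k n), \<lambda>n. R4 n * snd (tt \<beta> v \<omega> k n))"
      by (rule Suc.IH[THEN spec, THEN mp]) (unfold R4_def, rule loc[of "\<lambda>x. v * \<omega> k x"])
    show "tBD \<beta> v (Suc k) (\<lambda>m. (\<Prod>j<Suc k. \<omega> j (m j)) * R m) = (\<lambda>n. R n * fst (tt \<beta> v \<omega> (Suc k) n), \<lambda>n. R n * snd (tt \<beta> v \<omega> (Suc k) n))"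
      unfolding w_def[symmetric] tBD.simps e1 e2 e3 e4 I1 I2 I3 I4
      by (simp add: R1_def R2_def R3_def R4_def fun_eq_iff distrib_left mult.assoc mult.left_commute)
  qed
qed

fun gs :: "complex \<Rightarrow> complex \<Rightarrow> nat \<Rightarrow> complex" where
  "gs a b 0 = 0"
| "gs a b (Suc m) = b * gs a b m + a ^ m"

lemma gs_id: "(b - a) * gs a b m = b ^ m - a ^ m"
proof (induction m)
  case (Suc m)
  have "(b - a) * gs a b (Suc m) = b * ((b - a) * gs a b m) + (b - a) * a ^ m" by (simp add: algebra_simps)
  then show ?case unfolding Suc by (simp add: algebra_simps)
qed simp

lemma gs_sum: "gs a b m = (\<Sum>i<m. a ^ i * b ^ (m - Suc i))"
proof (induction m)
  case (Suc m)
  have "(\<Sum>i<Suc m. a ^ i * b ^ (Suc m - Suc i)) = (\<Sum>i<m. a ^ i * b ^ (Suc m - Suc i)) + a ^ m" by simp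
  also have "(\<Sum>i<m. a ^ i * b ^ (Suc m - Suc i)) = b * (\<Sum>i<m. a ^ i * b ^ (m - Suc i))"
    unfolding sum_distrib_left
  proof (rule sum.cong)
    fix i assume "i \<in> {..<m}"
    then have "Suc m - Suc i = Suc (m - Suc i)" by simp
    then show "a ^ i * b ^ (Suc m - Suc i) = b * (a ^ i * b ^ (m - Suc i))" by (simp add: mult_ac)
  qed simp
  finally show ?case using Suc by simp
qed simp

fun ptop :: "nat \<Rightarrow> (nat \<Rightarrow> nat) \<Rightarrow> nat" where
  "ptop 0 n = 0"
| "ptop (Suc k) n = (if 0 < n k then k else ptop k n)"

lemma ptop_le: "k > 0 \<Longrightarrow> ptop k n < k"
  by (induction k) (auto, metis less_Suc_eq ptop.simps(1) gr0I)

lemma ptop_le': "ptop k n \<le> k"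
  by (induction k) auto

lemma ptop_lt_iff: "L \<ge> 1 \<Longrightarrow> ptop k n < L \<longleftrightarrow> (\<forall>j. L \<le> j \<and> j < k \<longrightarrow> n j = 0)"
proof (induction k)
  case (Suc k)
  show ?case
  proof (cases "0 < n k")
    case True
    then show ?thesis using Suc.prems by (auto simp: less_Suc_eq) (metis not_less not_less0 True)
  next
    case False
    then show ?thesis using Suc by (auto simp: less_Suc_eq)
  qed
qed simp

lemma ptop_same: "L \<le> M \<Longrightarrow> (\<forall>j. L \<le> j \<and> j < M \<longrightarrow> n j = 0) \<Longrightarrow> ptop M n = ptop L n"
proof (induction M)
  case (Suc M)
  then show ?case by (cases "L = Suc M") (auto simp: le_Suc_eq)
qed simp

definition Ck :: "complex \<Rightarrow> nat \<Rightarrow> (nat \<Rightarrow> nat) \<Rightarrow> complex" where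
  "Ck \<beta> k n = (-\<beta>) ^ (\<Sum>j<k. j * n j)"

lemma Ck_Suc: "Ck \<beta> (Suc k) n = Ck \<beta> k n * (-\<beta>) ^ (k * n k)"
  by (simp add: Ck_def power_add)

definition omL :: "complex \<Rightarrow> nat \<Rightarrow> nat \<Rightarrow> nat \<Rightarrow> complex" where
  "omL \<beta> L j x = (if j < L then (-\<beta>) ^ (j * x) else (if x = 0 then 1 else 0))"

lemma tt_pre:
  fixes \<beta> v :: complex
  assumes v: "v \<noteq> 0" and be: "\<beta> \<noteq> 0"
  defines "a \<equiv> -\<beta> * v" and "b \<equiv> inverse v - \<beta> * v"
  shows "k \<le> L \<Longrightarrow> tt \<beta> v (omL \<beta> L) k n =
     (Ck \<beta> k n * b ^ ptop k n * gs a b (k - ptop k n),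
      Ck \<beta> k n * b ^ ptop k n * v ^ (k - ptop k n) / (-\<beta>) ^ ptop k n)"
proof (induction k)
  case 0
  then show ?case by (simp add: Ck_def)
next
  case (Suc k)
  then have IH: "tt \<beta> v (omL \<beta> L) k n =
     (Ck \<beta> k n * b ^ ptop k n * gs a b (k - ptop k n),
      Ck \<beta> k n * b ^ ptop k n * v ^ (k - ptop k n) / (-\<beta>) ^ ptop k n)" and kL: "k < L" by auto
  define p where "p = ptop k n"
  have pk: "p \<le> k" unfolding p_def by (rule ptop_le')
  have bpow: "(-\<beta>) ^ k = (-\<beta>) ^ p * (-\<beta>) ^ (k - p)" using pk by (simp add: power_add[symmetric])
  have apow: "a ^ (k - p) = (-\<beta>) ^ (k - p) * v ^ (k - p)" unfolding a_def by (metis mult_minus_left power_mult_distrib)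
  have ba: "b - a = inverse v" unfolding a_def b_def by simp
  have geo: "inverse v * gs a b (k - p) + a ^ (k - p) = b ^ (k - p)"
    using gs_id[of b a "k - p"] ba by simp
  show ?case
  proof (cases "n k = 0")
    case True
    then have pS: "ptop (Suc k) n = p" unfolding p_def by simp
    have SS: "Suc k - p = Suc (k - p)" using pk by simp
    show ?thesis using True kL
      unfolding tt.simps IH pS SS Ck_Suc p_def[symmetric]
      apply (simp add: omL_def gs.simps apow bpow field_simps be)
      by (simp add: b_def field_simps v)
  next
    case False
    then have pS: "ptop (Suc k) n = k" by simp
    obtain x where x: "n k = Suc x" using False by (cases "n k") auto
    have e1: "(-\<beta>) ^ (k * Suc x) = (-\<beta>) ^ (k * x) * (-\<beta>) ^ k" by (simp add: power_add power_mult mult_ac)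
    have fst_eq: "inverse v * ((-\<beta>) ^ (k * n k)) * (Ck \<beta> k n * b ^ p * gs a b (k - p)) + (-\<beta>) ^ (k * Suc (n k)) * (Ck \<beta> k n * b ^ p * v ^ (k - p) / (-\<beta>) ^ p)
        = Ck \<beta> k n * (-\<beta>) ^ (k * n k) * b ^ k"
    proof -
      have "(-\<beta>) ^ (k * Suc (n k)) = (-\<beta>) ^ (k * n k) * (-\<beta>) ^ p * (-\<beta>) ^ (k - p)"
        using bpow by (simp add: power_add mult_ac)
      then have "inverse v * ((-\<beta>) ^ (k * n k)) * (Ck \<beta> k n * b ^ p * gs a b (k - p)) + (-\<beta>) ^ (k * Suc (n k)) * (Ck \<beta> k n * b ^ p * v ^ (k - p) / (-\<beta>) ^ p)
         = Ck \<beta> k n * (-\<beta>) ^ (k * n k) * b ^ p * (inverse v * gs a b (k - p) + a ^ (k - p))"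
        using be by (simp add: apow field_simps)
      also have "\<dots> = Ck \<beta> k n * (-\<beta>) ^ (k * n k) * b ^ k" unfolding geo using pk by (simp add: power_add[symmetric])
      finally show ?thesis .
    qed
    have snd_eq: "(-\<beta>) ^ (k * x) * (Ck \<beta> k n * b ^ p * gs a b (k - p)) + v * (-\<beta>) ^ (k * n k) * (Ck \<beta> k n * b ^ p * v ^ (k - p) / (-\<beta>) ^ p)
        = Ck \<beta> k n * (-\<beta>) ^ (k * n k) * b ^ k * v / (-\<beta>) ^ k"
    proof -
      have "(-\<beta>) ^ (k * x) * (Ck \<beta> k n * b ^ p * gs a b (k - p)) + v * (-\<beta>) ^ (k * n k) * (Ck \<beta> k n * b ^ p * v ^ (k - p) / (-\<beta>) ^ p)
          = Ck \<beta> k n * (-\<beta>) ^ (k * n k) * b ^ p * v * (inverse v * gs a b (k - p) + a ^ (k - p)) / (-\<beta>) ^ k"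
        using be v unfolding x e1 by (simp add: apow bpow field_simps)
      also have "\<dots> = Ck \<beta> k n * (-\<beta>) ^ (k * n k) * b ^ k * v / (-\<beta>) ^ k" unfolding geo using pk by (simp add: power_add[symmetric])
      finally show ?thesis .
    qed
    show ?thesis using False kL
      unfolding tt.simps IH pS Ck_Suc p_def[symmetric]
      apply (simp add: omL_def b_def[symmetric])
      using fst_eq snd_eq unfolding x by (simp add: mult_ac)
  qed
qed

lemma tt_up:
  fixes \<beta> v :: complex
  defines "b \<equiv> inverse v - \<beta> * v"
  shows "L \<le> k \<Longrightarrow> fst (tt \<beta> v (omL \<beta> L) k n) =
     (if \<forall>j. L \<le> j \<and> j < k \<longrightarrow> n j = 0 then b ^ (k - L) * fst (tt \<beta> v (omL \<beta> L) L n) else 0)"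
proof (induction k)
  case 0
  then show ?case by simp
next
  case (Suc k)
  show ?case
  proof (cases "L = Suc k")
    case True
    then show ?thesis by simp
  next
    case False
    then have Lk: "L \<le> k" using Suc.prems by simp
    have "fst (tt \<beta> v (omL \<beta> L) (Suc k) n) = (if n k = 0 then b else 0) * fst (tt \<beta> v (omL \<beta> L) k n)"
      using Lk by (simp add: omL_def b_def)
    also have "\<dots> = (if \<forall>j. L \<le> j \<and> j < Suc k \<longrightarrow> n j = 0 then b ^ (Suc k - L) * fst (tt \<beta> v (omL \<beta> L) L n) else 0)"
      unfolding Suc.IH[OF Lk] using Lk
      by (auto simp: less_Suc_eq Suc_diff_le)
    finally show ?thesis .
  qed
qed

lemma Phi_eq:
  "L \<le> M \<Longrightarrow> (\<Prod>j<M. omL \<beta> L j (n j)) = (if \<forall>j. L \<le> j \<and> j < M \<longrightarrow> n j = 0 then Ck \<beta> M n else 0)"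
proof (induction M)
  case 0
  then show ?case by (simp add: Ck_def)
next
  case (Suc M)
  show ?case
  proof (cases "L = Suc M")
    case True
    then show ?thesis by (simp add: Ck_def power_sum omL_def power_add)
  next
    case False
    then have LM: "L \<le> M" using Suc.prems by simp
    show ?thesis using LM unfolding prod.lessThan_Suc Suc.IH[OF LM] Ck_Suc
      by (auto simp: omL_def less_Suc_eq)
  qed
qed

lemma Ck_same: "L \<le> M \<Longrightarrow> (\<forall>j. L \<le> j \<and> j < M \<longrightarrow> n j = 0) \<Longrightarrow> Ck \<beta> M n = Ck \<beta> L n"
proof (induction M)
  case (Suc M)
  then show ?case by (cases "L = Suc M") (auto simp: le_Suc_eq Ck_Suc)
qed simp

lemma sum_trunc: fixes L p :: nat shows "p \<le> L \<Longrightarrow> (\<Sum>i<L. if i < L - p then f i else 0) = (\<Sum>i<L - p. f i)"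
proof -
  assume "p \<le> L"
  have "(\<Sum>i<L. if i < L - p then f i else 0) = (\<Sum>i<L - p. if i < L - p then f i else 0)"
    by (rule sum.mono_neutral_right) auto
  then show ?thesis by simp
qed

lemma ptw:
  fixes \<beta> v :: complex
  assumes v: "v \<noteq> 0" and be: "\<beta> \<noteq> 0" and L: "1 \<le> L" "L \<le> M"
  defines "a \<equiv> -\<beta> * v" and "b \<equiv> inverse v - \<beta> * v"
  shows "fst (tt \<beta> v (omL \<beta> L) M n) = (\<Sum>i<L. a ^ i * b ^ (M - 1 - i) * (\<Prod>j<M. omL \<beta> (L - i) j (n j)))"
proof -
  define p where "p = ptop M n"
  have lhs: "fst (tt \<beta> v (omL \<beta> L) M n) = (if p < L then Ck \<beta> M n * (\<Sum>i<L - p. a ^ i * b ^ (M - 1 - i)) else 0)"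
  proof (cases "p < L")
    case True
    then have Z: "\<forall>j. L \<le> j \<and> j < M \<longrightarrow> n j = 0" using ptop_lt_iff[of L M n] L unfolding p_def by auto
    have pp: "ptop L n = p" unfolding p_def using ptop_same[OF L(2) Z] by simp
    have "fst (tt \<beta> v (omL \<beta> L) M n) = b ^ (M - L) * (Ck \<beta> L n * b ^ p * gs a b (L - p))"
      using tt_up[OF L(2), of \<beta> v n] Z tt_pre[OF v be order_refl, of L n] pp unfolding a_def b_def by simp
    also have "\<dots> = Ck \<beta> M n * (\<Sum>i<L - p. a ^ i * b ^ (M - 1 - i))"
    proof -
      have "b ^ (M - L) * b ^ p * gs a b (L - p) = (\<Sum>i<L - p. a ^ i * b ^ (M - 1 - i))"
        unfolding gs_sum sum_distrib_left
      proof (rule sum.cong)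
        fix i assume "i \<in> {..<L - p}"
        then have "M - L + p + (L - p - Suc i) = M - 1 - i" using True L by auto
        then show "b ^ (M - L) * b ^ p * (a ^ i * b ^ (L - p - Suc i)) = a ^ i * b ^ (M - 1 - i)"
          by (metis (no_types, lifting) mult.commute mult.left_commute power_add)
      qed simp
      then show ?thesis using Ck_same[OF L(2) Z] by (simp add: mult_ac)
    qed
    finally show ?thesis using True by simp
  next
    case False
    then have nz: "\<not> (\<forall>j. L \<le> j \<and> j < M \<longrightarrow> n j = 0)" using ptop_lt_iff[of L M n] L unfolding p_def by auto
    have "fst (tt \<beta> v (omL \<beta> L) M n) = 0" using tt_up[OF L(2), of \<beta> v n] by (simp only: if_not_P[OF nz])
    then show ?thesis using False by simp
  qed
  have rhs: "(\<Sum>i<L. a ^ i * b ^ (M - 1 - i) * (\<Prod>j<M. omL \<beta> (L - i) j (n j)))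
      = (\<Sum>i<L. if i < L - p then Ck \<beta> M n * (a ^ i * b ^ (M - 1 - i)) else 0)"
  proof (rule sum.cong)
    fix i assume i: "i \<in> {..<L}"
    then have "1 \<le> L - i" "L - i \<le> M" using L by auto
    then have "(\<Prod>j<M. omL \<beta> (L - i) j (n j)) = (if p < L - i then Ck \<beta> M n else 0)"
      unfolding Phi_eq[OF \<open>L - i \<le> M\<close>] p_def using ptop_lt_iff[of "L - i" M n] by auto
    moreover have "p < L - i \<longleftrightarrow> i < L - p" using i by auto
    ultimately show "a ^ i * b ^ (M - 1 - i) * (\<Prod>j<M. omL \<beta> (L - i) j (n j)) = (if i < L - p then Ck \<beta> M n * (a ^ i * b ^ (M - 1 - i)) else 0)"
      by simp
  qed simp
  show ?thesis
  proof (cases "p < L")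
    case True
    then show ?thesis unfolding lhs rhs sum_trunc[OF less_imp_le[OF True]] by (simp add: sum_distrib_left)
  next
    case False
    then have "L - p = 0" by simp
    then show ?thesis unfolding lhs rhs using False by simp
  qed
qed

fun hh :: "nat \<Rightarrow> (nat \<Rightarrow> complex) \<Rightarrow> nat \<Rightarrow> nat \<Rightarrow> complex" where
  "hh q s a 0 = (if q = 0 then 1 else 0)"
| "hh q s a (Suc n) = (\<Sum>j\<le>q. s a ^ j * hh (q - j) s (Suc a) n)"

lemma hsum: "(\<Sum>q<L. \<Sum>j\<le>q. s ^ j * H (q - j)) = (\<Sum>i<L. s ^ i * (\<Sum>q<L - i. H q :: complex))"
proof (induction L)
  case (Suc L)
  have "(\<Sum>i<Suc L. s ^ i * (\<Sum>q<Suc L - i. H q)) = (\<Sum>i<Suc L. s ^ i * (\<Sum>q<L - i. H q) + s ^ i * H (L - i))"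
  proof (rule sum.cong)
    fix i assume "i \<in> {..<Suc L}"
    then have "Suc L - i = Suc (L - i)" by auto
    then show "s ^ i * (\<Sum>q<Suc L - i. H q) = s ^ i * (\<Sum>q<L - i. H q) + s ^ i * H (L - i)"
      by (simp add: distrib_left)
  qed simp
  also have "\<dots> = (\<Sum>i<Suc L. s ^ i * (\<Sum>q<L - i. H q)) + (\<Sum>i<Suc L. s ^ i * H (L - i))"
    by (rule sum.distrib)
  also have "(\<Sum>i<Suc L. s ^ i * (\<Sum>q<L - i. H q)) = (\<Sum>i<L. s ^ i * (\<Sum>q<L - i. H q))" by simp
  also have "(\<Sum>i<Suc L. s ^ i * H (L - i)) = (\<Sum>i\<le>L. s ^ i * H (L - i))" by (simp only: lessThan_Suc_atMost)
  finally show ?case using Suc by simp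
qed simp

lemma pr_sumw: "pr M P (\<lambda>m. \<Sum>i\<in>I. c i * w i m) \<psi> = (\<Sum>i\<in>I. c i * pr M P (w i) \<psi>)"
  unfolding pr_def by (simp add: sum_distrib_left sum_distrib_right mult_ac sum.swap[of _ I])

definition Phi :: "complex \<Rightarrow> nat \<Rightarrow> nat \<Rightarrow> cstate" where
  "Phi \<beta> M L = (\<lambda>m. \<Prod>j<M. omL \<beta> L j (m j))"

lemma Psi_cons: "Psi \<beta> M (map v [a..<a + Suc n]) = Bop \<beta> M (v a) (Psi \<beta> M (map v [Suc a..<Suc a + n]))"
  unfolding Psi_def by (simp add: upt_conv_Cons del: upt_Suc)

lemma mainA:
  fixes \<beta> :: complex and v :: "nat \<Rightarrow> complex"
  assumes be: "\<beta> \<noteq> 0"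
  defines "bb \<equiv> \<lambda>j. inverse (v j) - \<beta> * v j" and "sg \<equiv> \<lambda>j. (-\<beta> * v j) / (inverse (v j) - \<beta> * v j)"
  shows "(\<forall>j\<in>{a..<a+n}. v j \<noteq> 0 \<and> bb j \<noteq> 0) \<Longrightarrow> 1 \<le> L \<Longrightarrow> L \<le> M \<Longrightarrow>
    pr M n (Phi \<beta> M L) (Psi \<beta> M (map v [a..<a+n])) = (\<Prod>j\<in>{a..<a+n}. bb j ^ (M - 1)) * (\<Sum>q<L. hh q sg a n)"
proof (induction n arbitrary: a L)
  case 0
  then show ?case unfolding pr_def configs0 by (simp add: Psi_def vac_def Phi_def omL_def prod.neutral)
next
  case (Suc n)
  let ?psi = "Psi \<beta> M (map v [Suc a..<Suc a + n])"
  have va: "v a \<noteq> 0" "bb a \<noteq> 0" using Suc.prems by auto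
  have rest: "\<forall>j\<in>{Suc a..<Suc a+n}. v j \<noteq> 0 \<and> bb j \<noteq> 0" using Suc.prems by auto
  have "pr M (Suc n) (Phi \<beta> M L) (Psi \<beta> M (map v [a..<a + Suc n]))
      = pr M n (fst (tBD \<beta> (v a) M (Phi \<beta> M L))) ?psi"
    unfolding Psi_cons Bop_def One_nat_def using transpose_BD[of M M \<beta> "v a"] by simp
  also have "fst (tBD \<beta> (v a) M (Phi \<beta> M L)) = (\<lambda>m. fst (tt \<beta> (v a) (omL \<beta> L) M m))"
    using transfer[of M \<beta> "v a" "omL \<beta> L"] unfolding Phi_def by (auto dest: spec[of _ "\<lambda>_. 1"])
  also have "\<dots> = (\<lambda>m. \<Sum>i<L. ((-\<beta> * v a) ^ i * bb a ^ (M - 1 - i)) * Phi \<beta> M (L - i) m)"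
    using ptw[OF va(1) be Suc.prems(2,3)] unfolding Phi_def bb_def by (simp add: mult_ac)
  also have "pr M n \<dots> ?psi = (\<Sum>i<L. ((-\<beta> * v a) ^ i * bb a ^ (M - 1 - i)) * pr M n (Phi \<beta> M (L - i)) ?psi)"
    by (rule pr_sumw)
  also have "\<dots> = (\<Sum>i<L. ((-\<beta> * v a) ^ i * bb a ^ (M - 1 - i)) * ((\<Prod>j\<in>{Suc a..<Suc a+n}. bb j ^ (M - 1)) * (\<Sum>q<L - i. hh q sg (Suc a) n)))"
    by (rule sum.cong) (use Suc.IH[OF rest] Suc.prems in auto)
  also have "\<dots> = (\<Sum>i<L. bb a ^ (M - 1) * (\<Prod>j\<in>{Suc a..<Suc a+n}. bb j ^ (M - 1)) * (sg a ^ i * (\<Sum>q<L - i. hh q sg (Suc a) n)))"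
  proof (rule sum.cong)
    fix i assume "i \<in> {..<L}"
    then have "i \<le> M - 1" using Suc.prems by auto
    then have e: "i + (M - 1 - i) = M - 1" by arith
    have "bb a ^ (M - 1) = bb a ^ i * bb a ^ (M - 1 - i)" by (metis e power_add)
    then show "(-\<beta> * v a) ^ i * bb a ^ (M - 1 - i) * ((\<Prod>j\<in>{Suc a..<Suc a+n}. bb j ^ (M - 1)) * (\<Sum>q<L - i. hh q sg (Suc a) n))
      = bb a ^ (M - 1) * (\<Prod>j\<in>{Suc a..<Suc a+n}. bb j ^ (M - 1)) * (sg a ^ i * (\<Sum>q<L - i. hh q sg (Suc a) n))"
    proof -
      have sga: "-\<beta> * v a = bb a * sg a" using va unfolding sg_def bb_def by simp
      have pw: "(-\<beta> * v a) ^ i = bb a ^ i * sg a ^ i" unfolding sga by (simp add: power_mult_distrib)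
      show ?thesis unfolding pw \<open>bb a ^ (M - 1) = _\<close> by (simp add: mult_ac)
    qed
  qed simp
  also have "\<dots> = bb a ^ (M - 1) * (\<Prod>j\<in>{Suc a..<Suc a+n}. bb j ^ (M - 1)) * (\<Sum>i<L. sg a ^ i * (\<Sum>q<L - i. hh q sg (Suc a) n))"
    by (rule sum_distrib_left[symmetric])
  also have "\<dots> = (\<Prod>j\<in>{a..<a + Suc n}. bb j ^ (M - 1)) * (\<Sum>q<L. hh q sg a (Suc n))"
    unfolding hh.simps hsum[symmetric] by (simp add: prod.atLeast_Suc_lessThan)
  finally show ?case .
qed

fun dd :: "(complex \<Rightarrow> complex) \<Rightarrow> (nat \<Rightarrow> complex) \<Rightarrow> nat \<Rightarrow> nat \<Rightarrow> complex" where
  "dd f y a 0 = f (y a)"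
| "dd f y a (Suc n) = dd (\<lambda>t. (f t - f (y a)) / (t - y a)) y (Suc a) n"

lemma dd_cong: "(\<And>i. i \<le> n \<Longrightarrow> f (y (a + i)) = g (y (a + i))) \<Longrightarrow> dd f y a n = dd g y a n"
proof (induction n arbitrary: f g a)
  case 0
  then show ?case using 0[of 0] by simp
next
  case (Suc n)
  have fa: "f (y a) = g (y a)" using Suc.prems[of 0] by simp
  show ?case unfolding dd.simps fa
  proof (rule Suc.IH)
    fix i assume "i \<le> n"
    then have "f (y (a + Suc i)) = g (y (a + Suc i))" using Suc.prems[of "Suc i"] by simp
    then show "(f (y (Suc a + i)) - g (y a)) / (y (Suc a + i) - y a) = (g (y (Suc a + i)) - g (y a)) / (y (Suc a + i) - y a)"
      by simp
  qed
qed

lemma dd_scale: "dd (\<lambda>t. c * f t) y a n = c * dd f y a n"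
proof (induction n arbitrary: f a)
  case (Suc n)
  have "(\<lambda>t. (c * f t - c * f (y a)) / (t - y a)) = (\<lambda>t. c * ((f t - f (y a)) / (t - y a)))"
    by (auto simp: algebra_simps)
  then show ?case by (simp only: dd.simps Suc.IH)
qed simp

lemma dd_sum: "finite I \<Longrightarrow> dd (\<lambda>t. \<Sum>i\<in>I. g i t) y a n = (\<Sum>i\<in>I. dd (g i) y a n)"
proof (induction n arbitrary: g a)
  case (Suc n)
  have "(\<lambda>t. ((\<Sum>i\<in>I. g i t) - (\<Sum>i\<in>I. g i (y a))) / (t - y a)) = (\<lambda>t. \<Sum>i\<in>I. (g i t - g i (y a)) / (t - y a))"
    by (simp add: sum_divide_distrib[symmetric] sum_subtractf)
  then show ?case using Suc by simp
qed simp

lemma flipdiv: "(x::complex) / (p - q) = (-1) * (x / (q - p))"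
proof -
  have "p - q = - (q - p)" by simp
  then show ?thesis by (simp only: divide_minus_right) simp
qed

lemma dd_affine: "dd f (\<lambda>i. 1 - s i) a n = (-1) ^ n * dd (\<lambda>u. f (1 - u)) s a n"
proof (induction n arbitrary: f a)
  case (Suc n)
  have "(\<lambda>u. (f (1 - u) - f (1 - s a)) / (1 - u - (1 - s a))) = (\<lambda>u. (-1) * ((f (1 - u) - f (1 - s a)) / (u - s a)))"
  proof (rule ext)
    fix u
    have "1 - u - (1 - s a) = s a - u" by simp
    then show "(f (1 - u) - f (1 - s a)) / (1 - u - (1 - s a)) = (-1) * ((f (1 - u) - f (1 - s a)) / (u - s a))"
      by (simp only: flipdiv[of _ "s a" u])
  qed
  then have eq: "(\<lambda>u. (f (1 - u) - f (1 - s a)) / (1 - u - (1 - s a))) = (\<lambda>u. (-1) * ((f (1 - u) - f (1 - s a)) / (u - s a)))" .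
  have "dd f (\<lambda>i. 1 - s i) a (Suc n) = dd (\<lambda>t. (f t - f (1 - s a)) / (t - (1 - s a))) (\<lambda>i. 1 - s i) (Suc a) n"
    by simp
  also have "\<dots> = (-1) ^ n * dd (\<lambda>u. (f (1 - u) - f (1 - s a)) / (1 - u - (1 - s a))) s (Suc a) n"
    by (rule Suc.IH)
  also have "\<dots> = (-1) ^ n * ((-1) * dd (\<lambda>u. (f (1 - u) - f (1 - s a)) / (u - s a)) s (Suc a) n)"
    by (simp only: eq dd_scale)
  also have "\<dots> = (-1) ^ Suc n * dd (\<lambda>u. f (1 - u)) s a (Suc n)" by simp
  finally show ?case .
qed simp

lemma dd_mono:
  "(\<And>i j. i \<le> n \<Longrightarrow> j \<le> n \<Longrightarrow> i \<noteq> j \<Longrightarrow> s (a + i) \<noteq> s (a + j)) \<Longrightarrow>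
   dd (\<lambda>t. t ^ d) s a n = (if n \<le> d then hh (d - n) s a (Suc n) else 0)"
proof (induction n arbitrary: a d)
  case 0
  have "(\<Sum>j\<le>d. s a ^ j * hh (d - j) s (Suc a) 0) = (\<Sum>j\<le>d. if j = d then s a ^ j else 0)" by (rule sum.cong) auto
  then show ?case by simp
next
  case (Suc n)
  have dist: "\<And>i j. i \<le> n \<Longrightarrow> j \<le> n \<Longrightarrow> i \<noteq> j \<Longrightarrow> s (Suc a + i) \<noteq> s (Suc a + j)"
    using Suc.prems by (metis Suc_le_mono add_Suc_shift nat.inject)
  have IH': "\<And>d. dd (\<lambda>t. t ^ d) s (Suc a) n = (if n \<le> d then hh (d - n) s (Suc a) (Suc n) else 0)"
    using Suc.IH[OF dist] .
  have "dd (\<lambda>t. t ^ d) s a (Suc n) = dd (\<lambda>t. (t ^ d - s a ^ d) / (t - s a)) s (Suc a) n" by simp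
  also have "\<dots> = dd (\<lambda>t. \<Sum>i<d. s a ^ (d - Suc i) * t ^ i) s (Suc a) n"
  proof (rule dd_cong)
    fix i assume "i \<le> n"
    then have ne: "s (Suc a + i) \<noteq> s a" using Suc.prems[of "Suc i" 0] by simp
    show "(s (Suc a + i) ^ d - s a ^ d) / (s (Suc a + i) - s a) = (\<Sum>k<d. s a ^ (d - Suc k) * s (Suc a + i) ^ k)"
      using ne by (simp add: power_diff_sumr2)
  qed
  also have "\<dots> = (\<Sum>i<d. s a ^ (d - Suc i) * dd (\<lambda>t. t ^ i) s (Suc a) n)"
    by (simp add: dd_sum dd_scale)
  also have "\<dots> = (\<Sum>i<d. s a ^ (d - Suc i) * (if n \<le> i then hh (i - n) s (Suc a) (Suc n) else 0))"
    by (simp only: IH')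
  also have "\<dots> = (if Suc n \<le> d then hh (d - Suc n) s a (Suc (Suc n)) else 0)"
  proof (cases "Suc n \<le> d")
    case False
    then show ?thesis by (auto intro!: sum.neutral)
  next
    case True
    have "(\<Sum>i<d. s a ^ (d - Suc i) * (if n \<le> i then hh (i - n) s (Suc a) (Suc n) else 0))
        = (\<Sum>i\<in>{n..<d}. s a ^ (d - Suc i) * hh (i - n) s (Suc a) (Suc n))"
      by (rule sum.mono_neutral_cong_right) auto
    also have "\<dots> = (\<Sum>j\<le>d - Suc n. s a ^ j * hh (d - Suc n - j) s (Suc a) (Suc n))"
      by (rule sum.reindex_bij_witness[where i="\<lambda>j. d - Suc j" and j="\<lambda>i. d - Suc i"])
         (use True in \<open>auto simp: Suc_diff_Suc\<close>)
    finally show ?thesis using True by simp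
  qed
  finally show ?case .
qed

lemma det1: assumes A: "A \<in> carrier_mat 1 1" shows "det A = A $$ (0, 0)"
proof -
  have "mat_delete A 0 0 \<in> carrier_mat 0 0" using mat_delete_carrier[OF A] by simp
  then have "det (mat_delete A 0 0) = 1" by simp
  then show ?thesis by (subst laplace_expansion_column[OF A, of 0]) (auto simp: cofactor_def)
qed

lemma det_col_scale:
  fixes A B :: "complex mat"
  assumes A: "A \<in> carrier_mat n n" and B: "B \<in> carrier_mat n n"
    and e: "\<And>i k. i < n \<Longrightarrow> k < n \<Longrightarrow> A $$ (i, k) = B $$ (i, k) * d k"
  shows "det A = (\<Prod>k\<in>{0..<n}. d k) * det B"
proof -
  have "det A = (\<Sum>p\<in>{p. p permutes {0..<n}}. signof p * (\<Prod>i = 0..<n. A $$ (i, p i)))"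
    by (rule det_def'[OF A])
  also have "\<dots> = (\<Sum>p\<in>{p. p permutes {0..<n}}. (\<Prod>k\<in>{0..<n}. d k) * (signof p * (\<Prod>i = 0..<n. B $$ (i, p i))))"
  proof (rule sum.cong)
    fix p assume "p \<in> {p. p permutes {0..<n}}"
    then have p: "p permutes {0..<n}" by simp
    have "(\<Prod>i = 0..<n. A $$ (i, p i)) = (\<Prod>i = 0..<n. B $$ (i, p i) * d (p i))"
      by (rule prod.cong) (use p permutes_in_image in \<open>auto intro!: e\<close>)
    also have "\<dots> = (\<Prod>i = 0..<n. B $$ (i, p i)) * (\<Prod>i = 0..<n. d (p i))" by (rule prod.distrib)
    also have "(\<Prod>i = 0..<n. d (p i)) = (\<Prod>k\<in>{0..<n}. d k)"
      by (rule prod.reindex_bij_betw[OF permutes_imp_bij[OF p]])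
    finally show "signof p * (\<Prod>i = 0..<n. A $$ (i, p i)) = (\<Prod>k\<in>{0..<n}. d k) * (signof p * (\<Prod>i = 0..<n. B $$ (i, p i)))"
      by (simp add: mult_ac)
  qed simp
  also have "\<dots> = (\<Prod>k\<in>{0..<n}. d k) * det B"
    unfolding det_def'[OF B] by (simp add: sum_distrib_left)
  finally show ?thesis .
qed

definition Wm :: "(complex \<Rightarrow> complex) \<Rightarrow> (nat \<Rightarrow> complex) \<Rightarrow> nat \<Rightarrow> nat \<Rightarrow> complex mat" where
  "Wm f y a n = mat (Suc n) (Suc n) (\<lambda>(i, k). if i < n then y (a + k) ^ (n - 1 - i) else f (y (a + k)))"

fun Pn :: "(nat \<Rightarrow> complex) \<Rightarrow> nat \<Rightarrow> nat \<Rightarrow> complex" where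
  "Pn y a 0 = 1"
| "Pn y a (Suc n) = (-1) ^ n * (\<Prod>k\<in>{0..<Suc n}. y (Suc a + k) - y a) * Pn y (Suc a) n"

lemma detW: "det (Wm f y a n) = Pn y a n * dd f y a n"
proof (induction n arbitrary: f a)
  case 0
  show ?case unfolding Wm_def by (subst det1) auto
next
  case (Suc n)
  define N where "N = Suc (Suc n)"
  define W where "W = Wm f y a (Suc n)"
  have Wc: "W \<in> carrier_mat N N" unfolding W_def Wm_def N_def by simp
  define Am where "Am = (\<lambda>m. mat N N (\<lambda>(i, k). if i < m then y (a + k) ^ (n - 1 - i) * (y (a + k) - y a) else W $$ (i, k)))"
  have Amc: "\<And>m. Am m \<in> carrier_mat N N" unfolding Am_def by simp
  have A0: "Am 0 = W" unfolding Am_def using Wc by (auto intro!: eq_matI)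
  have Astep: "\<And>m. m < n \<Longrightarrow> Am (Suc m) = addrow (- y a) m (Suc m) (Am m)"
  proof -
    fix m assume m: "m < n"
    show "Am (Suc m) = addrow (- y a) m (Suc m) (Am m)"
    proof (rule eq_matI)
      fix i k assume i: "i < dim_row (addrow (- y a) m (Suc m) (Am m))" and k: "k < dim_col (addrow (- y a) m (Suc m) (Am m))"
      then have iN: "i < N" and kN: "k < N" using Amc[of m] unfolding carrier_mat_def by auto
      have sm: "Suc m < N" using m unfolding N_def by simp
      show "Am (Suc m) $$ (i, k) = addrow (- y a) m (Suc m) (Am m) $$ (i, k)"
      proof (cases "i = m")
        case True
        have pw: "y (a + k) ^ (n - m) = y (a + k) * y (a + k) ^ (n - 1 - m)"
          using m by (metis Suc_diff_Suc diff_Suc_1 diff_Suc_eq_diff_pred power_Suc)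
        show ?thesis using True iN kN sm m unfolding Am_def W_def Wm_def N_def
          by (simp add: pw algebra_simps)
      next
        case False
        then show ?thesis using iN kN unfolding Am_def by (auto simp: less_Suc_eq)
      qed
    qed (unfold Am_def, auto)
  qed
  have detAm: "\<And>m. m \<le> n \<Longrightarrow> det (Am m) = det W"
  proof -
    fix m show "m \<le> n \<Longrightarrow> det (Am m) = det W"
    proof (induction m)
      case 0 then show ?case using A0 by simp
    next
      case (Suc m)
      then have "m < n" by simp
      then show ?case using Suc det_addrow[of "Suc m" N m "Am m" "- y a"] Amc Astep unfolding N_def by simp
    qed
  qed
  define B where "B = addrow (- f (y a)) (Suc n) n (Am n)"
  have Bc: "B \<in> carrier_mat N N" unfolding B_def using Amc by simp
  have detB: "det B = det W" unfolding B_def using det_addrow[of n N "Suc n" "Am n"] Amc detAm[of n] unfolding N_def by simp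
  have Bent: "\<And>i k. i < N \<Longrightarrow> k < N \<Longrightarrow> B $$ (i, k) =
      (if i < n then y (a + k) ^ (n - 1 - i) * (y (a + k) - y a) else if i = n then 1 else f (y (a + k)) - f (y a))"
  proof -
    fix i k assume i: "i < N" and k: "k < N"
    show "B $$ (i, k) = (if i < n then y (a + k) ^ (n - 1 - i) * (y (a + k) - y a) else if i = n then 1 else f (y (a + k)) - f (y a))"
      using i k Amc unfolding B_def Am_def W_def Wm_def N_def by (auto simp: less_Suc_eq)
  qed
  have "det B = (\<Sum>i<N. B $$ (i, 0) * cofactor B i 0)"
    by (rule laplace_expansion_column[OF Bc]) (simp add: N_def)
  also have "\<dots> = B $$ (n, 0) * cofactor B n 0"
  proof -
    have z: "\<And>i. i < N \<Longrightarrow> i \<noteq> n \<Longrightarrow> B $$ (i, 0) = 0"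
    proof -
      fix i assume "i < N" "i \<noteq> n"
      then show "B $$ (i, 0) = 0" using Bent[of i 0] unfolding N_def by simp
    qed
    have "(\<Sum>i<N. B $$ (i, 0) * cofactor B i 0) = B $$ (n, 0) * cofactor B n 0 + (\<Sum>i\<in>{..<N} - {n}. B $$ (i, 0) * cofactor B i 0)"
      by (rule sum.remove) (auto simp: N_def)
    also have "(\<Sum>i\<in>{..<N} - {n}. B $$ (i, 0) * cofactor B i 0) = 0"
      by (rule sum.neutral) (auto simp: z)
    finally show ?thesis by simp
  qed
  also have "\<dots> = (-1) ^ n * det (mat_delete B n 0)"
    using Bent[of n 0] by (simp add: N_def cofactor_def)
  finally have dB: "det B = (-1) ^ n * det (mat_delete B n 0)" .
  define g where "g = (\<lambda>t. (f t - f (y a)) / (t - y a))"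
  have "det (mat_delete B n 0) = (\<Prod>k\<in>{0..<Suc n}. y (Suc a + k) - y a) * det (Wm g y (Suc a) n)"
  proof (rule det_col_scale)
    show "mat_delete B n 0 \<in> carrier_mat (Suc n) (Suc n)" using mat_delete_carrier[OF Bc] unfolding N_def by simp
    show "Wm g y (Suc a) n \<in> carrier_mat (Suc n) (Suc n)" unfolding Wm_def by simp
    fix i k assume i: "i < Suc n" and k: "k < Suc n"
    have "mat_delete B n 0 $$ (i, k) = B $$ (if i < n then i else Suc i, Suc k)"
      unfolding mat_delete_def using i k Bc unfolding N_def by simp
    also have "\<dots> = Wm g y (Suc a) n $$ (i, k) * (y (Suc a + k) - y a)"
    proof (cases "i < n")
      case True
      then show ?thesis using i k Bent[of i "Suc k"] unfolding Wm_def N_def by simp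
    next
      case False
      then have "i = n" using i by simp
      moreover have "f (y (Suc a + k)) - f (y a) = g (y (Suc a + k)) * (y (Suc a + k) - y a)"
        unfolding g_def by (cases "y (Suc a + k) = y a") auto
      ultimately show ?thesis using i k Bent[of "Suc n" "Suc k"] unfolding Wm_def N_def by simp
    qed
    finally show "mat_delete B n 0 $$ (i, k) = Wm g y (Suc a) n $$ (i, k) * (y (Suc a + k) - y a)" .
  qed
  then show ?case
    using dB detB Suc.IH[of g "Suc a"] unfolding W_def g_def by simp
qed

lemma powi_neg: "e \<le> 0 \<Longrightarrow> (x::complex) powi e = (inverse x) ^ nat (-e)"
  by (simp add: power_int_def)

definition fV :: "nat \<Rightarrow> nat \<Rightarrow> complex \<Rightarrow> complex" where
  "fV M N t = - (\<Sum>m = max (N - 1) 1..M + N - 1. (-1) ^ m * of_nat ((M + N - 1) choose m) * t ^ (m - 1))"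

definition Um :: "complex \<Rightarrow> nat \<Rightarrow> nat \<Rightarrow> complex mat" where
  "Um \<beta> M N = mat N N (\<lambda>(j0, i). if j0 < N - 1 then
      (if i \<le> j0 then (-1) ^ (j0 - i) * (-\<beta>) powi (int (j0 + 1) - int N) * of_nat ((M + N - 1) choose (j0 - i)) else 0)
      else (if i = N - 1 then 1 else 0))"

lemma Vmat_fact:
  assumes N: "N \<ge> 1" and y: "\<And>k. k \<in> {1..N} \<Longrightarrow> y k = inverse (1 - \<beta> * (v k)\<^sup>2)"
  shows "Vmat \<beta> M N v = Um \<beta> M N * Wm (fV M N) y 1 (N - 1)"
proof (rule eq_matI)
  fix i k assume i: "i < dim_row (Um \<beta> M N * Wm (fV M N) y 1 (N - 1))" and k: "k < dim_col (Um \<beta> M N * Wm (fV M N) y 1 (N - 1))"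
  then have iN: "i < N" and kN: "k < N" using N by (auto simp: Um_def Wm_def)
  have yk: "y (1 + k) = inverse (1 - \<beta> * (v (k + 1))\<^sup>2)" using y[of "1 + k"] kN by (simp add: add.commute)
  define X where "X = 1 - \<beta> * (v (k + 1))\<^sup>2"
  have prod: "(Um \<beta> M N * Wm (fV M N) y 1 (N - 1)) $$ (i, k) = (\<Sum>l\<in>{0..<N}. Um \<beta> M N $$ (i, l) * Wm (fV M N) y 1 (N - 1) $$ (l, k))"
    using iN kN N by (simp add: Um_def Wm_def scalar_prod_def)
  show "Vmat \<beta> M N v $$ (i, k) = (Um \<beta> M N * Wm (fV M N) y 1 (N - 1)) $$ (i, k)"
  proof (cases "i < N - 1")
    case True
    have "(\<Sum>l\<in>{0..<N}. Um \<beta> M N $$ (i, l) * Wm (fV M N) y 1 (N - 1) $$ (l, k))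
        = (\<Sum>l\<in>{0..i}. (-1) ^ (i - l) * (-\<beta>) powi (int (i + 1) - int N) * of_nat ((M + N - 1) choose (i - l)) * y (1 + k) ^ (N - 2 - l))"
    proof (rule sum.mono_neutral_cong_right)
      show "{0..i} \<subseteq> {0..<N}" using iN by auto
      show "\<forall>l\<in>{0..<N} - {0..i}. Um \<beta> M N $$ (i, l) * Wm (fV M N) y 1 (N - 1) $$ (l, k) = 0"
        using iN True by (auto simp: Um_def)
      fix l assume "l \<in> {0..i}"
      then show "Um \<beta> M N $$ (i, l) * Wm (fV M N) y 1 (N - 1) $$ (l, k) = (-1) ^ (i - l) * (-\<beta>) powi (int (i + 1) - int N) * of_nat ((M + N - 1) choose (i - l)) * y (1 + k) ^ (N - 2 - l)"
        using iN kN True by (simp add: Um_def Wm_def)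
    qed simp
    also have "\<dots> = (\<Sum>m = 0..i. (-1) ^ m * (-\<beta>) powi (int (i + 1) - int N) * of_nat ((M + N - 1) choose m) * X powi (1 - int m + int (i + 1) - int N))"
    proof (rule sum.reindex_bij_witness[where i="\<lambda>m. i - m" and j="\<lambda>l. i - l"])
      fix l assume l: "l \<in> {0..i}"
      define m where "m = i - l"
      have mi: "m \<le> i" and lm: "l = i - m" using l unfolding m_def by auto
      have "X powi (1 - int m + int (i + 1) - int N) = (inverse X) ^ nat (- (1 - int m + int (i + 1) - int N))"
        using True by (intro powi_neg) auto
      also have "nat (- (1 - int m + int (i + 1) - int N)) = N - 2 - l" using True mi l unfolding m_def by auto
      finally show "(-1) ^ (i - l) * (-\<beta>) powi (int (i + 1) - int N) * of_nat ((M + N - 1) choose (i - l)) * X powi (1 - int (i - l) + int (i + 1) - int N)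
          = (-1) ^ (i - l) * (-\<beta>) powi (int (i + 1) - int N) * of_nat ((M + N - 1) choose (i - l)) * y (1 + k) ^ (N - 2 - l)"
        using yk unfolding m_def[symmetric] by (simp add: X_def)
    qed auto
    also have "\<dots> = Vmat \<beta> M N v $$ (i, k)"
      using iN kN True unfolding Vmat_def X_def by (simp add: Let_def)
    finally show ?thesis using prod by simp
  next
    case False
    then have iN1: "i = N - 1" using iN by simp
    have "(\<Sum>l\<in>{0..<N}. Um \<beta> M N $$ (i, l) * Wm (fV M N) y 1 (N - 1) $$ (l, k)) = Um \<beta> M N $$ (i, N - 1) * Wm (fV M N) y 1 (N - 1) $$ (N - 1, k)"
    proof -
      have "(\<Sum>l\<in>{0..<N}. Um \<beta> M N $$ (i, l) * Wm (fV M N) y 1 (N - 1) $$ (l, k)) = (\<Sum>l\<in>{N - 1}. Um \<beta> M N $$ (i, l) * Wm (fV M N) y 1 (N - 1) $$ (l, k))"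
        by (rule sum.mono_neutral_right) (use iN N iN1 in \<open>auto simp: Um_def\<close>)
      then show ?thesis by simp
    qed
    also have "\<dots> = fV M N (y (1 + k))" using iN1 kN N by (simp add: Um_def Wm_def)
    also have "\<dots> = Vmat \<beta> M N v $$ (i, k)"
    proof -
      have "\<And>m. m \<in> {max (N - 1) 1..M + N - 1} \<Longrightarrow> X powi (1 - int m) = y (1 + k) ^ (m - 1)"
      proof -
        fix m assume "m \<in> {max (N - 1) 1..M + N - 1}"
        then have m1: "m \<ge> 1" by auto
        have "X powi (1 - int m) = (inverse X) ^ nat (- (1 - int m))" using m1 by (intro powi_neg) auto
        also have "nat (- (1 - int m)) = m - 1" using m1 by auto
        finally show "X powi (1 - int m) = y (1 + k) ^ (m - 1)" using yk unfolding X_def by simp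
      qed
      then show ?thesis using iN1 iN kN N unfolding Vmat_def fV_def X_def
        by (simp add: Let_def)
    qed
    finally show ?thesis using prod by simp
  qed
qed (use N in \<open>auto simp: Vmat_def Um_def Wm_def\<close>)

lemma fV_split:
  fixes t :: complex
  assumes t: "t \<noteq> 0" and M: "M \<ge> 1" and N: "N \<ge> 1"
  shows "fV M N t = (\<Sum>i<M + N - 1. (1 - t) ^ i) + (\<Sum>m\<in>{1..<max (N - 1) 1}. (-1) ^ m * of_nat ((M + N - 1) choose m) * t ^ (m - 1))"
proof -
  define K where "K = M + N - 1"
  define L0 where "L0 = max (N - 1) 1"
  define A where "A = (\<Sum>m = 1..K. (-1) ^ m * of_nat (K choose m) * t ^ (m - 1))"
  have tA: "t * A = (1 - t) ^ K - 1"
  proof -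
    have "t * A = (\<Sum>m = 1..K. (-1) ^ m * of_nat (K choose m) * t ^ m)"
      unfolding A_def sum_distrib_left
    proof (rule sum.cong)
      fix m assume "m \<in> {1..K}"
      then have "t ^ m = t * t ^ (m - 1)" by (cases m) auto
      then show "t * ((-1) ^ m * of_nat (K choose m) * t ^ (m - 1)) = (-1) ^ m * of_nat (K choose m) * t ^ m"
        by (simp add: mult_ac)
    qed simp
    also have "\<dots> = (\<Sum>m\<le>K. of_nat (K choose m) * (-t) ^ m * 1 ^ (K - m)) - 1"
    proof -
      have "(\<Sum>m\<le>K. of_nat (K choose m) * (-t) ^ m * 1 ^ (K - m)) = 1 + (\<Sum>m = 1..K. of_nat (K choose m) * (-t) ^ m * 1 ^ (K - m))"
        by (simp add: atMost_atLeast0 sum.atLeast_Suc_atMost)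
      moreover have "(\<Sum>m = 1..K. of_nat (K choose m) * (-t) ^ m * 1 ^ (K - m)) = (\<Sum>m = 1..K. (-1) ^ m * of_nat (K choose m) * t ^ m)"
      proof (rule sum.cong)
        fix m assume "m \<in> {1..K}"
        have "(-t) ^ m = (-1) ^ m * t ^ m" by (rule power_minus)
        then show "of_nat (K choose m) * (-t) ^ m * 1 ^ (K - m) = (-1) ^ m * of_nat (K choose m) * t ^ m"
          by (simp only: power_one mult_1_right mult_1_left mult.left_commute mult.commute)
      qed simp
      ultimately show ?thesis by simp
    qed
    also have "\<dots> = (1 - t) ^ K - 1" using binomial_ring[of "-t" 1 K] by simp
    finally show ?thesis .
  qed
  have tS: "t * (\<Sum>i<K. (1 - t) ^ i) = 1 - (1 - t) ^ K"
    using power_diff_1_eq[of "1 - t" K] by (simp add: algebra_simps)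
  have SA: "(\<Sum>i<K. (1 - t) ^ i) = - A"
  proof -
    have "t * ((\<Sum>i<K. (1 - t) ^ i) + A) = 0" using tA tS by (simp add: distrib_left)
    then show ?thesis using t by (simp add: eq_neg_iff_add_eq_0)
  qed
  have split: "A = (\<Sum>m\<in>{1..<L0}. (-1) ^ m * of_nat (K choose m) * t ^ (m - 1)) + (\<Sum>m = L0..K. (-1) ^ m * of_nat (K choose m) * t ^ (m - 1))"
  proof -
    have "{1..K} = {1..<L0} \<union> {L0..K}" using M N unfolding K_def L0_def by auto
    then show ?thesis unfolding A_def by (simp add: sum.union_disjoint ivl_disj_int)
  qed
  show ?thesis unfolding fV_def K_def[symmetric] L0_def[symmetric] SA split by simp
qed

lemma dd_add: "dd (\<lambda>t. f t + g t) y a n = dd f y a n + dd g y a n"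
  using dd_sum[of "{0::nat, 1}" "\<lambda>i t. if i = 0 then f t else g t" y a n] by simp

lemma dd_fV:
  assumes M: "M \<ge> 1" and N: "N \<ge> 1"
    and y: "y = (\<lambda>i. 1 - s i)"
    and nz: "\<And>i. i \<le> N - 1 \<Longrightarrow> y (1 + i) \<noteq> 0"
    and dist: "\<And>i j. i \<le> N - 1 \<Longrightarrow> j \<le> N - 1 \<Longrightarrow> i \<noteq> j \<Longrightarrow> s (1 + i) \<noteq> s (1 + j)"
  shows "dd (fV M N) y 1 (N - 1) = (-1) ^ (N - 1) * (\<Sum>q<M. hh q s 1 N)"
proof -
  define n where "n = N - 1"
  have Nn: "N = Suc n" using N unfolding n_def by simp
  define g1 where "g1 = (\<lambda>t::complex. \<Sum>i<M + N - 1. (1 - t) ^ i)"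
  define g2 where "g2 = (\<lambda>t::complex. \<Sum>m\<in>{1..<max (N - 1) 1}. (-1) ^ m * of_nat ((M + N - 1) choose m) * t ^ (m - 1))"
  have ydist: "\<And>i j. i \<le> n \<Longrightarrow> j \<le> n \<Longrightarrow> i \<noteq> j \<Longrightarrow> y (1 + i) \<noteq> y (1 + j)"
    using dist unfolding y n_def by auto
  have "dd (fV M N) y 1 n = dd (\<lambda>t. g1 t + g2 t) y 1 n"
    by (rule dd_cong) (use nz fV_split[OF _ M N] in \<open>auto simp: g1_def g2_def n_def\<close>)
  also have "\<dots> = dd g1 y 1 n + dd g2 y 1 n" by (rule dd_add)
  also have "dd g2 y 1 n = 0"
  proof -
    have "dd g2 y 1 n = (\<Sum>m\<in>{1..<max (N - 1) 1}. (-1) ^ m * of_nat ((M + N - 1) choose m) * dd (\<lambda>t. t ^ (m - 1)) y 1 n)"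
      unfolding g2_def by (simp add: dd_sum dd_scale)
    also have "\<dots> = 0"
    proof (rule sum.neutral, intro ballI)
      fix m assume m: "m \<in> {1..<max (N - 1) 1}"
      then have "\<not> n \<le> m - 1" unfolding n_def by auto
      then show "(-1) ^ m * of_nat ((M + N - 1) choose m) * dd (\<lambda>t. t ^ (m - 1)) y 1 n = 0"
        using dd_mono[of n y 1 "m - 1", OF ydist] by simp
    qed
    finally show ?thesis .
  qed
  also have "dd g1 y 1 n = (-1) ^ n * dd (\<lambda>u. g1 (1 - u)) s 1 n"
    unfolding y by (rule dd_affine)
  also have "dd (\<lambda>u. g1 (1 - u)) s 1 n = (\<Sum>i<M + n. dd (\<lambda>u. u ^ i) s 1 n)"
    unfolding g1_def using Nn by (simp add: dd_sum)
  also have "\<dots> = (\<Sum>i<M + n. if n \<le> i then hh (i - n) s 1 (Suc n) else 0)"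
    by (rule sum.cong) (use dd_mono[of n s 1] dist in \<open>auto simp: n_def\<close>)
  also have "\<dots> = (\<Sum>i\<in>{n..<M + n}. hh (i - n) s 1 (Suc n))"
    by (rule sum.mono_neutral_cong_right) auto
  also have "\<dots> = (\<Sum>q<M. hh q s 1 N)"
    using sum.shift_bounds_nat_ivl[of "\<lambda>i. hh (i - n) s 1 (Suc n)" 0 n M] Nn
    by (simp add: atLeast0LessThan add.commute)
  finally show ?thesis unfolding n_def by simp
qed

lemma det_Um:
  assumes N: "N \<ge> 1"
  shows "det (Um \<beta> M N) = (\<Prod>e\<in>{1..N - 1}. inverse (-\<beta>) ^ e)"
proof -
  have c: "Um \<beta> M N \<in> carrier_mat N N" unfolding Um_def by simp
  have "det (Um \<beta> M N) = prod_list (diag_mat (Um \<beta> M N))"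
    by (rule det_lower_triangular[OF _ c]) (auto simp: Um_def)
  also have "\<dots> = (\<Prod>i = 0..<N. Um \<beta> M N $$ (i, i))" unfolding prod_list_diag_prod using c by simp
  also have "\<dots> = (\<Prod>i = 0..<N - 1. inverse (-\<beta>) ^ (N - 1 - i))"
  proof -
    have "{0..<N} = insert (N - 1) {0..<N - 1}" using N by auto
    then have "(\<Prod>i = 0..<N. Um \<beta> M N $$ (i, i)) = Um \<beta> M N $$ (N - 1, N - 1) * (\<Prod>i = 0..<N - 1. Um \<beta> M N $$ (i, i))"
      by simp
    also have "Um \<beta> M N $$ (N - 1, N - 1) = 1" using N by (simp add: Um_def)
    also have "(\<Prod>i = 0..<N - 1. Um \<beta> M N $$ (i, i)) = (\<Prod>i = 0..<N - 1. inverse (-\<beta>) ^ (N - 1 - i))"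
    proof (rule prod.cong)
      fix i assume i: "i \<in> {0..<N - 1}"
      then have "Um \<beta> M N $$ (i, i) = (-\<beta>) powi (int (i + 1) - int N)" by (simp add: Um_def)
      also have "\<dots> = inverse (-\<beta>) ^ nat (- (int (i + 1) - int N))" using i by (intro powi_neg) auto
      also have "nat (- (int (i + 1) - int N)) = N - 1 - i" using i by auto
      finally show "Um \<beta> M N $$ (i, i) = inverse (-\<beta>) ^ (N - 1 - i)" .
    qed simp
    finally show ?thesis by simp
  qed
  also have "\<dots> = (\<Prod>e\<in>{1..N - 1}. inverse (-\<beta>) ^ e)"
    by (rule prod.reindex_bij_witness[where i="\<lambda>e. N - 1 - e" and j="\<lambda>i. N - 1 - i"]) auto
  finally show ?thesis .
qed

definition Pairs :: "(nat \<Rightarrow> complex) \<Rightarrow> nat \<Rightarrow> nat \<Rightarrow> complex" where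
  "Pairs v a n = (\<Prod>(j, k)\<in>{(j, k). a \<le> j \<and> j < k \<and> k \<le> a + n}. (v k)\<^sup>2 - (v j)\<^sup>2)"

lemma Pairs_Suc: "Pairs v a (Suc n) = (\<Prod>k\<in>{0..<Suc n}. (v (Suc a + k))\<^sup>2 - (v a)\<^sup>2) * Pairs v (Suc a) n"
proof -
  have fin: "finite {(j, k). Suc a \<le> j \<and> j < k \<and> k \<le> Suc a + n}"
    by (rule finite_subset[of _ "{Suc a..Suc a + n} \<times> {Suc a..Suc a + n}"]) auto
  have eq: "{(j, k). a \<le> j \<and> j < k \<and> k \<le> a + Suc n} = (\<lambda>k. (a, Suc a + k)) ` {0..<Suc n} \<union> {(j, k). Suc a \<le> j \<and> j < k \<and> k \<le> Suc a + n}"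
  proof (rule equalityI, rule subsetI)
    fix p assume "p \<in> {(j, k). a \<le> j \<and> j < k \<and> k \<le> a + Suc n}"
    then obtain j k where p: "p = (j, k)" "a \<le> j" "j < k" "k \<le> a + Suc n" by auto
    show "p \<in> (\<lambda>k. (a, Suc a + k)) ` {0..<Suc n} \<union> {(j, k). Suc a \<le> j \<and> j < k \<and> k \<le> Suc a + n}"
    proof (cases "j = a")
      case True
      then have "p = (\<lambda>k. (a, Suc a + k)) (k - Suc a)" using p by auto
      moreover have "k - Suc a \<in> {0..<Suc n}" using p by auto
      ultimately show ?thesis by blast
    next
      case False
      then show ?thesis using p by auto
    qed
  qed auto
  have "Pairs v a (Suc n) = (\<Prod>p\<in>(\<lambda>k. (a, Suc a + k)) ` {0..<Suc n}. case p of (j, k) \<Rightarrow> (v k)\<^sup>2 - (v j)\<^sup>2) * Pairs v (Suc a) n"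
    unfolding Pairs_def eq by (rule prod.union_disjoint) (use fin in auto)
  also have "(\<Prod>p\<in>(\<lambda>k. (a, Suc a + k)) ` {0..<Suc n}. case p of (j, k) \<Rightarrow> (v k)\<^sup>2 - (v j)\<^sup>2) = (\<Prod>k\<in>{0..<Suc n}. (v (Suc a + k))\<^sup>2 - (v a)\<^sup>2)"
    by (subst prod.reindex) (auto simp: inj_on_def)
  finally show ?thesis .
qed

lemma invdiff: "p \<noteq> 0 \<Longrightarrow> q \<noteq> 0 \<Longrightarrow> (inverse q - inverse p) * p * q = p - (q::complex)"
  by (simp add: field_simps)

lemma Pn_Pairs:
  fixes \<beta> :: complex
  shows "(\<forall>j\<in>{a..a + n}. 1 - \<beta> * (v j)\<^sup>2 \<noteq> 0 \<and> y j = inverse (1 - \<beta> * (v j)\<^sup>2)) \<Longrightarrow>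
    Pn y a n * (\<Prod>j\<in>{a..a + n}. (1 - \<beta> * (v j)\<^sup>2) ^ n) = (-1) ^ n * (\<Prod>e\<in>{1..n}. (-\<beta>) ^ e) * Pairs v a n"
proof (induction n arbitrary: a)
  case 0
  have e: "{(j, k). a \<le> j \<and> j < k \<and> k \<le> a + 0} = {}" by auto
  show ?case unfolding Pairs_def e by simp
next
  case (Suc n)
  define x where "x = (\<lambda>j. 1 - \<beta> * (v j)\<^sup>2)"
  have hx: "\<And>j. j \<in> {a..a + Suc n} \<Longrightarrow> x j \<noteq> 0 \<and> y j = inverse (x j)" using Suc.prems unfolding x_def by auto
  have IH: "Pn y (Suc a) n * (\<Prod>j\<in>{Suc a..Suc a + n}. x j ^ n) = (-1) ^ n * (\<Prod>e\<in>{1..n}. (-\<beta>) ^ e) * Pairs v (Suc a) n"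
    using Suc.IH[of "Suc a"] Suc.prems unfolding x_def by auto
  have shift: "\<And>g :: nat \<Rightarrow> complex. (\<Prod>j\<in>{Suc a..Suc a + n}. g j) = (\<Prod>k\<in>{0..<Suc n}. g (Suc a + k))"
  proof -
    fix g :: "nat \<Rightarrow> complex"
    show "(\<Prod>j\<in>{Suc a..Suc a + n}. g j) = (\<Prod>k\<in>{0..<Suc n}. g (Suc a + k))"
      by (rule prod.reindex_bij_witness[where i="\<lambda>k. Suc a + k" and j="\<lambda>j. j - Suc a"]) auto
  qed
  have key: "(\<Prod>k\<in>{0..<Suc n}. y (Suc a + k) - y a) * x a ^ Suc n * (\<Prod>k\<in>{0..<Suc n}. x (Suc a + k))
      = \<beta> ^ Suc n * (\<Prod>k\<in>{0..<Suc n}. (v (Suc a + k))\<^sup>2 - (v a)\<^sup>2)"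
  proof -
    have "(\<Prod>k\<in>{0..<Suc n}. y (Suc a + k) - y a) * x a ^ Suc n * (\<Prod>k\<in>{0..<Suc n}. x (Suc a + k))
        = (\<Prod>k\<in>{0..<Suc n}. (y (Suc a + k) - y a) * x a * x (Suc a + k))"
      by (simp add: prod.distrib)
    also have "\<dots> = (\<Prod>k\<in>{0..<Suc n}. \<beta> * ((v (Suc a + k))\<^sup>2 - (v a)\<^sup>2))"
    proof (rule prod.cong)
      fix k assume "k \<in> {0..<Suc n}"
      then have h1: "x (Suc a + k) \<noteq> 0" "y (Suc a + k) = inverse (x (Suc a + k))" using hx[of "Suc a + k"] by auto
      have h2: "x a \<noteq> 0" "y a = inverse (x a)" using hx[of a] by auto
      show "(y (Suc a + k) - y a) * x a * x (Suc a + k) = \<beta> * ((v (Suc a + k))\<^sup>2 - (v a)\<^sup>2)"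
        unfolding h1(2) h2(2) invdiff[OF h2(1) h1(1)] unfolding x_def by (simp add: algebra_simps)
    qed simp
    also have "\<dots> = \<beta> ^ Suc n * (\<Prod>k\<in>{0..<Suc n}. (v (Suc a + k))\<^sup>2 - (v a)\<^sup>2)"
      by (simp add: prod.distrib)
    finally show ?thesis .
  qed
  have split: "(\<Prod>j\<in>{a..a + Suc n}. x j ^ Suc n) = x a ^ Suc n * (\<Prod>j\<in>{Suc a..Suc a + n}. x j ^ n) * (\<Prod>k\<in>{0..<Suc n}. x (Suc a + k))"
  proof -
    have "(\<Prod>j\<in>{a..a + Suc n}. x j ^ Suc n) = x a ^ Suc n * (\<Prod>j\<in>{Suc a..Suc a + n}. x j ^ Suc n)"
      by (simp add: prod.atLeast_Suc_atMost)
    also have "(\<Prod>j\<in>{Suc a..Suc a + n}. x j ^ Suc n) = (\<Prod>j\<in>{Suc a..Suc a + n}. x j ^ n) * (\<Prod>j\<in>{Suc a..Suc a + n}. x j)"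
      by (simp add: prod.distrib mult.commute)
    finally show ?thesis unfolding shift by (simp add: mult_ac)
  qed
  have "Pn y a (Suc n) * (\<Prod>j\<in>{a..a + Suc n}. x j ^ Suc n)
      = (-1) ^ n * ((\<Prod>k\<in>{0..<Suc n}. y (Suc a + k) - y a) * x a ^ Suc n * (\<Prod>k\<in>{0..<Suc n}. x (Suc a + k)))
        * (Pn y (Suc a) n * (\<Prod>j\<in>{Suc a..Suc a + n}. x j ^ n))"
    unfolding split by (simp add: mult_ac)
  also have "\<dots> = (-1) ^ n * (\<beta> ^ Suc n * (\<Prod>k\<in>{0..<Suc n}. (v (Suc a + k))\<^sup>2 - (v a)\<^sup>2)) * ((-1) ^ n * (\<Prod>e\<in>{1..n}. (-\<beta>) ^ e) * Pairs v (Suc a) n)"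
    unfolding key IH ..
  also have "\<dots> = (-1) ^ Suc n * (\<Prod>e\<in>{1..Suc n}. (-\<beta>) ^ e) * Pairs v a (Suc n)"
  proof -
    have e1: "(\<Prod>e\<in>{1..Suc n}. (-\<beta>) ^ e) = (-\<beta>) ^ Suc n * (\<Prod>e\<in>{1..n}. (-\<beta>) ^ e)"
      by (simp add: prod.nat_ivl_Suc' mult.commute)
    have s1: "(-1) ^ n * (-1) ^ n = (1::complex)" by (simp add: power_mult_distrib[symmetric])
    have s2: "(-1) ^ Suc n * (-1) ^ Suc n = (1::complex)" by (simp only: power_mult_distrib[symmetric]) simp
    have e2: "(-\<beta>) ^ Suc n = (-1) ^ Suc n * \<beta> ^ Suc n" by (rule power_minus)
    let ?P = "(\<Prod>k\<in>{0..<Suc n}. (v (Suc a + k))\<^sup>2 - (v a)\<^sup>2)"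
    let ?E = "(\<Prod>e\<in>{1..n}. (-\<beta>) ^ e)"
    have "(-1) ^ n * (\<beta> ^ Suc n * ?P) * ((-1) ^ n * ?E * Pairs v (Suc a) n) = ((-1) ^ n * (-1) ^ n) * (\<beta> ^ Suc n * ?E * ?P * Pairs v (Suc a) n)"
      by (simp only: mult_ac)
    also have "\<dots> = ((-1) ^ Suc n * (-1) ^ Suc n) * (\<beta> ^ Suc n * ?E * ?P * Pairs v (Suc a) n)"
      unfolding s1 s2 ..
    also have "\<dots> = (-1) ^ Suc n * ((-1) ^ Suc n * \<beta> ^ Suc n * ?E) * (?P * Pairs v (Suc a) n)"
      by (simp only: mult_ac)
    also have "\<dots> = (-1) ^ Suc n * (\<Prod>e\<in>{1..Suc n}. (-\<beta>) ^ e) * Pairs v a (Suc n)"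
      unfolding Pairs_Suc e1 e2 ..
    finally show ?thesis .
  qed
  finally show ?case unfolding x_def .
qed

theorem mainTheorem9:
  fixes \<beta> :: complex and M N :: nat and v :: "nat \<Rightarrow> complex"
  assumes "\<beta> \<noteq> 0" and "M \<ge> 1" and "N \<ge> 1"
    and "\<And>j. j \<in> {1..N} \<Longrightarrow> v j \<noteq> 0"
    and "\<And>j. j \<in> {1..N} \<Longrightarrow> inverse ((v j)\<^sup>2) \<noteq> \<beta>"
    and "\<And>j k. j \<in> {1..N} \<Longrightarrow> k \<in> {1..N} \<Longrightarrow> j \<noteq> k \<Longrightarrow> (v j)\<^sup>2 \<noteq> (v k)\<^sup>2"
  shows "(\<Sum>n\<in>configs M N. (-\<beta>) ^ (\<Sum>j=1..M-1. j * n j) * Psi \<beta> M (map v [1..<N+1]) n)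
    = (\<Prod>j=1..N. v j ^ (N - 1) * (inverse (v j) - \<beta> * v j) ^ (M + N - 2))
      / (\<Prod>(j, k)\<in>{(j, k). 1 \<le> j \<and> j < k \<and> k \<le> N}. (v k)\<^sup>2 - (v j)\<^sup>2)
      * det (Vmat \<beta> M N v)"
proof -
  note be = assms(1) and M = assms(2) and N = assms(3) and vnz = assms(4) and vb = assms(5) and vd = assms(6)
  define n where "n = N - 1"
  have Nn: "N = Suc n" "1 + n = N" using N unfolding n_def by auto
  define bb where "bb = (\<lambda>j. inverse (v j) - \<beta> * v j)"
  define sg where "sg = (\<lambda>j. (-\<beta> * v j) / (inverse (v j) - \<beta> * v j))"
  define x where "x = (\<lambda>j. 1 - \<beta> * (v j)\<^sup>2)"
  define y where "y = (\<lambda>i. 1 - sg i)"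
  have xnz: "\<And>j. j \<in> {1..N} \<Longrightarrow> x j \<noteq> 0"
  proof
    fix j assume j: "j \<in> {1..N}" and "x j = 0"
    then have "\<beta> * (v j)\<^sup>2 = 1" unfolding x_def by simp
    then have "inverse ((v j)\<^sup>2) = \<beta>" by (metis inverse_unique mult.commute)
    with vb[OF j] show False by simp
  qed
  have bbx: "\<And>j. j \<in> {1..N} \<Longrightarrow> bb j = x j / v j"
    using vnz unfolding bb_def x_def by (simp add: field_simps power2_eq_square)
  have bbnz: "\<And>j. j \<in> {1..N} \<Longrightarrow> bb j \<noteq> 0" using bbx xnz vnz by simp
  have yx: "\<And>j. j \<in> {1..N} \<Longrightarrow> y j = inverse (x j)"
  proof -
    fix j assume j: "j \<in> {1..N}"
    have e1: "sg j = (-\<beta> * v j) / bb j" unfolding sg_def bb_def ..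
    have e2: "sg j = - (\<beta> * (v j)\<^sup>2) / x j"
      unfolding e1 bbx[OF j] using vnz[OF j] xnz[OF j] by (simp add: field_simps power2_eq_square)
    have "y j = (x j + \<beta> * (v j)\<^sup>2) / x j" unfolding y_def e2 using xnz[OF j] by (simp add: field_simps)
    also have "x j + \<beta> * (v j)\<^sup>2 = 1" unfolding x_def by simp
    finally show "y j = inverse (x j)" by (simp add: field_simps)
  qed
  have sgd: "\<And>i j. i \<in> {1..N} \<Longrightarrow> j \<in> {1..N} \<Longrightarrow> i \<noteq> j \<Longrightarrow> sg i \<noteq> sg j"
  proof
    fix i j assume i: "i \<in> {1..N}" and j: "j \<in> {1..N}" and ij: "i \<noteq> j" and e: "sg i = sg j"
    then have "y i = y j" unfolding y_def by simp
    then have "inverse (x i) = inverse (x j)" using yx[OF i] yx[OF j] by simp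
    then have "x i = x j" by simp
    then have "\<beta> * (v i)\<^sup>2 = \<beta> * (v j)\<^sup>2" unfolding x_def by simp
    then have "(v i)\<^sup>2 = (v j)\<^sup>2" using be by simp
    with vd[OF i j ij] show False by simp
  qed
  define S where "S = (\<Sum>q<M. hh q sg 1 N)"
  have L1: "(\<Sum>n\<in>configs M N. (-\<beta>) ^ (\<Sum>j=1..M-1. j * n j) * Psi \<beta> M (map v [1..<N+1]) n)
      = pr M N (Phi \<beta> M M) (Psi \<beta> M (map v [1..<1 + N]))"
    unfolding pr_def
  proof (rule sum.cong)
    fix m :: "nat \<Rightarrow> nat"
    have s: "(\<Sum>j<M. j * m j) = (\<Sum>j=1..M-1. j * m j)"
    proof -
      have "(\<Sum>j<M. j * m j) = (\<Sum>j\<in>{0..<M}. j * m j)" by (simp add: atLeast0LessThan)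
      also have "\<dots> = 0 * m 0 + (\<Sum>j\<in>{Suc 0..<M}. j * m j)" using M by (subst sum.atLeast_Suc_lessThan) auto
      also have "{Suc 0..<M} = {1..M-1}" using M by auto
      finally show ?thesis by simp
    qed
    have "Phi \<beta> M M m = (-\<beta>) ^ (\<Sum>j<M. j * m j)"
      unfolding Phi_def omL_def by (simp add: power_sum)
    then show "(-\<beta>) ^ (\<Sum>j=1..M-1. j * m j) * Psi \<beta> M (map v [1..<N+1]) m = Phi \<beta> M M m * Psi \<beta> M (map v [1..<1 + N]) m"
      unfolding s by (simp add: add.commute)
  qed simp
  have L2: "pr M N (Phi \<beta> M M) (Psi \<beta> M (map v [1..<1 + N])) = (\<Prod>j\<in>{1..N}. bb j ^ (M - 1)) * S"
  proof -
    have h: "pr M N (Phi \<beta> M M) (Psi \<beta> M (map v [1..<1 + N])) = (\<Prod>j\<in>{1..<1 + N}. bb j ^ (M - 1)) * (\<Sum>q<M. hh q sg 1 N)"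
      unfolding bb_def sg_def
      by (rule mainA[OF be]) (use vnz bbnz M in \<open>auto simp: bb_def\<close>)
    have e: "{1..<1 + N} = {1..N}" by auto
    show ?thesis unfolding S_def using h unfolding e .
  qed
  have yV: "\<And>k. k \<in> {1..N} \<Longrightarrow> y k = inverse (1 - \<beta> * (v k)\<^sup>2)" using yx unfolding x_def by simp
  have detV: "det (Vmat \<beta> M N v) = det (Um \<beta> M N) * det (Wm (fV M N) y 1 n)"
  proof -
    have VF: "Vmat \<beta> M N v = Um \<beta> M N * Wm (fV M N) y 1 (N - 1)" by (rule Vmat_fact[OF N yV])
    have "det (Um \<beta> M N * Wm (fV M N) y 1 (N - 1)) = det (Um \<beta> M N) * det (Wm (fV M N) y 1 (N - 1))"
      by (rule det_mult[of _ N]) (use N in \<open>auto simp: Um_def Wm_def\<close>)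
    then show ?thesis using VF unfolding n_def by simp
  qed
  have dW: "det (Wm (fV M N) y 1 n) = Pn y 1 n * ((-1) ^ n * S)"
  proof -
    have "dd (fV M N) y 1 (N - 1) = (-1) ^ (N - 1) * (\<Sum>q<M. hh q sg 1 N)"
    proof (rule dd_fV[OF M N])
      show "y = (\<lambda>i. 1 - sg i)" by (simp add: y_def)
      fix i assume i: "i \<le> N - 1"
      then have "1 + i \<in> {1..N}" using N by auto
      then show "y (1 + i) \<noteq> 0" using yx xnz by simp
    next
      fix i j assume "i \<le> N - 1" "j \<le> N - 1" "i \<noteq> j"
      then show "sg (1 + i) \<noteq> sg (1 + j)" using sgd[of "1 + i" "1 + j"] N by auto
    qed
    then show ?thesis using detW[of "fV M N" y 1 n] unfolding S_def n_def by simp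
  qed
  define E where "E = (\<Prod>e\<in>{1..n}. (-\<beta>) ^ e)"
  have Enz: "E \<noteq> 0" unfolding E_def using be by simp
  have dU: "det (Um \<beta> M N) = inverse E"
    unfolding det_Um[OF N] E_def n_def power_inverse using prod_inversef[of "\<lambda>e. (-\<beta>) ^ e" "{1..N - 1}"] by (simp add: comp_def)
  define X where "X = (\<Prod>j\<in>{1..N}. x j ^ n)"
  have Xnz: "X \<noteq> 0" unfolding X_def using xnz by simp
  define PP where "PP = (\<Prod>(j, k)\<in>{(j, k). 1 \<le> j \<and> j < k \<and> k \<le> N}. (v k)\<^sup>2 - (v j)\<^sup>2)"
  have PPnz: "PP \<noteq> 0"
  proof -
    have fin: "finite {(j, k). 1 \<le> j \<and> j < k \<and> k \<le> N}"
      by (rule finite_subset[of _ "{1..N} \<times> {1..N}"]) auto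
    show ?thesis unfolding PP_def
      by (subst prod_zero_iff[OF fin]) (use vd in \<open>auto\<close>)
  qed
  have Pn: "Pn y 1 n * X = (-1) ^ n * E * PP"
  proof -
    have "Pn y 1 n * (\<Prod>j\<in>{1..1 + n}. (1 - \<beta> * (v j)\<^sup>2) ^ n) = (-1) ^ n * (\<Prod>e\<in>{1..n}. (-\<beta>) ^ e) * Pairs v 1 n"
      by (rule Pn_Pairs) (use xnz yx Nn in \<open>auto simp: x_def\<close>)
    then show ?thesis unfolding X_def E_def PP_def Pairs_def x_def Nn(2) .
  qed
  have s1: "(-1) ^ n * (-1) ^ n = (1::complex)" by (simp add: power_mult_distrib[symmetric])
  have dVf: "det (Vmat \<beta> M N v) = PP * S / X"
  proof -
    have "det (Vmat \<beta> M N v) = inverse E * (Pn y 1 n * ((-1) ^ n * S))" unfolding detV dU dW ..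
    also have "Pn y 1 n = (-1) ^ n * E * PP / X" using Pn Xnz by (simp add: field_simps)
    finally have "det (Vmat \<beta> M N v) = inverse E * E * ((-1) ^ n * (-1) ^ n) * PP * S / X" by (simp add: mult_ac)
    then show ?thesis using Enz s1 by simp
  qed
  have pref: "(\<Prod>j=1..N. v j ^ (N - 1) * (inverse (v j) - \<beta> * v j) ^ (M + N - 2)) = (\<Prod>j\<in>{1..N}. bb j ^ (M - 1)) * X"
  proof -
    have "(\<Prod>j=1..N. v j ^ (N - 1) * (inverse (v j) - \<beta> * v j) ^ (M + N - 2)) = (\<Prod>j\<in>{1..N}. bb j ^ (M - 1) * x j ^ n)"
    proof (rule prod.cong)
      fix j assume j: "j \<in> {1..N}"
      have e: "M + N - 2 = (M - 1) + n" using M N unfolding n_def by auto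
      have "v j ^ (N - 1) * (inverse (v j) - \<beta> * v j) ^ (M + N - 2) = bb j ^ (M - 1) * (v j * bb j) ^ n"
        unfolding e n_def bb_def by (simp add: power_add power_mult_distrib mult_ac)
      also have "v j * bb j = x j" using bbx[OF j] vnz[OF j] by simp
      finally show "v j ^ (N - 1) * (inverse (v j) - \<beta> * v j) ^ (M + N - 2) = bb j ^ (M - 1) * x j ^ n" .
    qed simp
    then show ?thesis unfolding X_def by (simp add: prod.distrib)
  qed
  show ?thesis
    unfolding L1 L2 pref dVf PP_def[symmetric] using PPnz Xnz by (simp add: field_simps)
qed


end
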